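(* Under the standing assumptions below, let $E$ be a maximal loxodromic subgroup of $G$, let $x_0\in C_E$ and let $t\in G$ be $E$--reduced at $x_0$. Then for all $v\in E$, $$(t^{\pm1}x_0,vx_0)_{x_0}\leqslant [E]/2+1500\delta.$$
   Context: Standing assumptions: $X$ is a geodesic $\delta$--hyperbolic space (distance $|x-y|$, Gromov product $(p,q)_x=\frac12(|p-x|+|q-x|-|p-q|)$, $(p,r)_x\geqslant\min\{(p,q)_x,(q,r)_x\}-\delta$); $N_0\geqslant1$; either $\delta>0$, $\kappa_0\geqslant\delta$, $\rho_0:=\delta/N_0$, or $\delta=0$, $X$ a simplicial tree with edges of length $\rho_0$ and $\kappa_0\geqslant\rho_0$. $G$ acts by isometries, $(\kappa_0,N_0)$--acylindrically: for all $x,y$ with $|x-y|\geqslant\kappa_0$ at most $N_0$ elements $g$ satisfy $|gx-x|\leqslant100\delta$, $|gy-y|\leqslant100\delta$. $[g]:=\inf_x|gx-x|$; $g$ hyperbolic if $\lim_n\frac1n|g^nx-x|>0$. Elementary subgroup: limit set in $\partial X$ of at most two points; loxodromic: elementary and containing a hyperbolic element; a loxodromic subgroup has limit set $\{x^+,x^-\}$ and lies in a unique maximal loxodromic subgroup. $[E]:=\min\{[g]\mid g\in E,[g]>200\delta\}$. $1$--quasi-geodesics and $L$-local $1$--quasi-geodesics: subpaths (over intervals of diameter $\leqslant L$ in the local case) have length at most the distance of their endpoints plus $\delta$. $C_E$: $40\delta$--neighbourhood of the union of all bi-infinite $200\delta$-local $1$--quasi-geodesics with endpoints $x^\pm$ (the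 axis in the tree case). An element $t$ is $E$--reduced at $x_0$ if $x_0\in C_E$ and $|tx_0-x_0|=\min_{e,f\in E}|(etf)x_0-x_0|$. *)

theory Defs
  imports "HOL-Analysis.Analysis" "HOL-Algebra.Group"
begin

definition gromov :: "'x::metric_space \<Rightarrow> 'x \<Rightarrow> 'x \<Rightarrow> real" where
  "gromov x p q = (dist p x + dist q x - dist p q) / 2"

definition geodesic_space :: "'x::metric_space itself \<Rightarrow> bool" where
  "geodesic_space _ \<longleftrightarrow> (\<forall>x y::'x. \<exists>\<gamma>::real \<Rightarrow> 'x. \<gamma> 0 = x \<and> \<gamma> (dist x y) = y \<and>
     (\<forall>s\<in>{0..dist x y}. \<forall>t\<in>{0..dist x y}. dist (\<gamma> s) (\<gamma> t) = \<bar>s - t\<bar>))"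

definition hyperbolic_space :: "'x::metric_space itself \<Rightarrow> real \<Rightarrow> bool" where
  "hyperbolic_space _ \<delta> \<longleftrightarrow> \<delta> \<ge> 0 \<and>
     (\<forall>x p q r::'x. gromov x p r \<ge> min (gromov x p q) (gromov x q r) - \<delta>)"

text \<open>Metric simplicial tree with edges of length \<rho>, given by its vertex set V:
  every point lies on an edge (a segment of length \<rho> between two vertices), and all
  Gromov products of vertices are multiples of \<rho> (so distances between vertices are
  multiples of \<rho> and branching only happens at vertices).\<close>
definition simplicial_tree :: "'x::metric_space set \<Rightarrow> real \<Rightarrow> bool" where
  "simplicial_tree V \<rho> \<longleftrightarrow> \<rho> > 0 \<and> geodesic_space TYPE('x) \<and> hyperbolic_space TYPE('x) 0 \<and>
     (\<forall>u\<in>V. \<forall>v\<in>V. \<forall>w\<in>V. \<exists>n::nat. gromov u v w = real n * \<rho>) \<and>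
     (\<forall>x::'x. \<exists>v\<in>V. \<exists>w\<in>V. dist v w = \<rho> \<and> dist v x + dist x w = \<rho>)"

definition path_length :: "(real \<Rightarrow> 'x::metric_space) \<Rightarrow> real \<Rightarrow> real \<Rightarrow> ereal" where
  "path_length \<gamma> a b = (SUP ts \<in> {ts. sorted ts \<and> set ts \<subseteq> {a..b}}.
      ereal (\<Sum>i<length ts - 1. dist (\<gamma> (ts ! i)) (\<gamma> (ts ! Suc i))))"

definition arclength_param :: "(real \<Rightarrow> 'x::metric_space) \<Rightarrow> bool" where
  "arclength_param \<gamma> \<longleftrightarrow> (\<forall>a b. a \<le> b \<longrightarrow> path_length \<gamma> a b = ereal (b - a))"

definition local_quasi_geodesic :: "real \<Rightarrow> real \<Rightarrow> (real \<Rightarrow> 'x::metric_space) \<Rightarrow> bool" where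
  "local_quasi_geodesic L \<delta> \<gamma> \<longleftrightarrow> arclength_param \<gamma> \<and>
     (\<forall>a b. a \<le> b \<longrightarrow> b - a \<le> L \<longrightarrow> path_length \<gamma> a b \<le> ereal (dist (\<gamma> a) (\<gamma> b) + \<delta>))"

definition geodesic_line :: "(real \<Rightarrow> 'x::metric_space) \<Rightarrow> bool" where
  "geodesic_line \<gamma> \<longleftrightarrow> (\<forall>s t. dist (\<gamma> s) (\<gamma> t) = \<bar>s - t\<bar>)"

definition converges_at_infinity :: "(nat \<Rightarrow> 'x::metric_space) \<Rightarrow> bool" where
  "converges_at_infinity s \<longleftrightarrow>
     (\<forall>b M. \<exists>N. \<forall>m\<ge>N. \<forall>n\<ge>N. gromov b (s m) (s n) \<ge> M)"

definition seq_equiv :: "(nat \<Rightarrow> 'x::metric_space) \<Rightarrow> (nat \<Rightarrow> 'x) \<Rightarrow> bool" where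
  "seq_equiv s u \<longleftrightarrow> (\<forall>b M. \<exists>N. \<forall>m\<ge>N. \<forall>n\<ge>N. gromov b (s m) (u n) \<ge> M)"

definition gromov_boundary :: "'x::metric_space itself \<Rightarrow> (nat \<Rightarrow> 'x) set set" where
  "gromov_boundary _ = {\<xi>. \<exists>s. converges_at_infinity s \<and>
       \<xi> = {u. converges_at_infinity u \<and> seq_equiv s u}}"

definition isometric_action :: "('g, 'b) monoid_scheme \<Rightarrow> ('g \<Rightarrow> 'x::metric_space \<Rightarrow> 'x) \<Rightarrow> bool" where
  "isometric_action G act \<longleftrightarrow> group G \<and>
     (\<forall>x. act \<one>\<^bsub>G\<^esub> x = x) \<and>
     (\<forall>g\<in>carrier G. \<forall>h\<in>carrier G. \<forall>x. act (g \<otimes>\<^bsub>G\<^esub> h) x = act g (act h x)) \<and>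
     (\<forall>g\<in>carrier G. \<forall>x y. dist (act g x) (act g y) = dist x y)"

definition acylindrical :: "('g, 'b) monoid_scheme \<Rightarrow> ('g \<Rightarrow> 'x::metric_space \<Rightarrow> 'x)
    \<Rightarrow> real \<Rightarrow> real \<Rightarrow> nat \<Rightarrow> bool" where
  "acylindrical G act \<delta> \<kappa> N \<longleftrightarrow> (\<forall>x y. dist x y \<ge> \<kappa> \<longrightarrow>
     (let S = {g\<in>carrier G. dist (act g x) x \<le> 100 * \<delta> \<and> dist (act g y) y \<le> 100 * \<delta>}
      in finite S \<and> card S \<le> N))"

definition standing_assumptions :: "('g, 'b) monoid_scheme \<Rightarrow> ('g \<Rightarrow> 'x::metric_space \<Rightarrow> 'x)
    \<Rightarrow> real \<Rightarrow> real \<Rightarrow> real \<Rightarrow> nat \<Rightarrow> bool" where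
  "standing_assumptions G act \<delta> \<kappa>\<^sub>0 \<rho>\<^sub>0 N\<^sub>0 \<longleftrightarrow>
     geodesic_space TYPE('x) \<and> hyperbolic_space TYPE('x) \<delta> \<and> N\<^sub>0 \<ge> 1 \<and>
     ((\<delta> > 0 \<and> \<kappa>\<^sub>0 \<ge> \<delta> \<and> \<rho>\<^sub>0 = \<delta> / real N\<^sub>0) \<or>
      (\<delta> = 0 \<and> \<kappa>\<^sub>0 \<ge> \<rho>\<^sub>0 \<and>
       (\<exists>V. simplicial_tree V \<rho>\<^sub>0 \<and> (\<forall>g\<in>carrier G. act g ` V \<subseteq> V)))) \<and>
     isometric_action G act \<and> acylindrical G act \<delta> \<kappa>\<^sub>0 N\<^sub>0"

definition translation_length :: "('g \<Rightarrow> 'x::metric_space \<Rightarrow> 'x) \<Rightarrow> 'g \<Rightarrow> real" where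
  "translation_length act g = (INF x. dist (act g x) x)"

definition hyperbolic_elem :: "('g, 'b) monoid_scheme \<Rightarrow> ('g \<Rightarrow> 'x::metric_space \<Rightarrow> 'x) \<Rightarrow> 'g \<Rightarrow> bool" where
  "hyperbolic_elem G act g \<longleftrightarrow>
     (\<exists>x l. l > 0 \<and> (\<lambda>n. dist (act (g [^]\<^bsub>G\<^esub> (n::nat)) x) x / real n) \<longlonglongrightarrow> l)"

definition limit_set :: "('g \<Rightarrow> 'x::metric_space \<Rightarrow> 'x) \<Rightarrow> 'g set \<Rightarrow> (nat \<Rightarrow> 'x) set set" where
  "limit_set act H = {\<xi> \<in> gromov_boundary TYPE('x).
      \<exists>h x. (\<forall>n. h n \<in> H) \<and> (\<lambda>n. act (h n) x) \<in> \<xi>}"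

definition elementary :: "('g, 'b) monoid_scheme \<Rightarrow> ('g \<Rightarrow> 'x::metric_space \<Rightarrow> 'x) \<Rightarrow> 'g set \<Rightarrow> bool" where
  "elementary G act H \<longleftrightarrow> subgroup H G \<and> finite (limit_set act H) \<and> card (limit_set act H) \<le> 2"

definition loxodromic :: "('g, 'b) monoid_scheme \<Rightarrow> ('g \<Rightarrow> 'x::metric_space \<Rightarrow> 'x) \<Rightarrow> 'g set \<Rightarrow> bool" where
  "loxodromic G act H \<longleftrightarrow> elementary G act H \<and> (\<exists>g\<in>H. hyperbolic_elem G act g)"

definition max_loxodromic :: "('g, 'b) monoid_scheme \<Rightarrow> ('g \<Rightarrow> 'x::metric_space \<Rightarrow> 'x) \<Rightarrow> 'g set \<Rightarrow> bool" where
  "max_loxodromic G act E \<longleftrightarrow> loxodromic G act E \<and>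
     (\<forall>F. loxodromic G act F \<and> E \<subseteq> F \<longrightarrow> F = E)"

definition subgroup_trlen :: "('g \<Rightarrow> 'x::metric_space \<Rightarrow> 'x) \<Rightarrow> real \<Rightarrow> 'g set \<Rightarrow> real" where
  "subgroup_trlen act \<delta> E = Inf {translation_length act g | g. g \<in> E \<and> translation_length act g > 200 * \<delta>}"

definition has_endpoints :: "('g \<Rightarrow> 'x::metric_space \<Rightarrow> 'x) \<Rightarrow> 'g set \<Rightarrow> (real \<Rightarrow> 'x) \<Rightarrow> bool" where
  "has_endpoints act E \<gamma> \<longleftrightarrow> (\<exists>\<xi>p \<xi>m. \<xi>p \<in> gromov_boundary TYPE('x) \<and> \<xi>m \<in> gromov_boundary TYPE('x) \<and>
      (\<lambda>n. \<gamma> (real n)) \<in> \<xi>p \<and> (\<lambda>n. \<gamma> (- real n)) \<in> \<xi>m \<and> {\<xi>p, \<xi>m} = limit_set act E)"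

definition C_set :: "('g \<Rightarrow> 'x::metric_space \<Rightarrow> 'x) \<Rightarrow> real \<Rightarrow> 'g set \<Rightarrow> 'x set" where
  "C_set act \<delta> E = (if \<delta> = 0
     then {x. \<exists>\<gamma> s. geodesic_line \<gamma> \<and> has_endpoints act E \<gamma> \<and> x = \<gamma> s}
     else {x. \<exists>\<gamma> s. local_quasi_geodesic (200 * \<delta>) \<delta> \<gamma> \<and> has_endpoints act E \<gamma> \<and>
                dist x (\<gamma> s) \<le> 40 * \<delta>})"

definition E_reduced :: "('g, 'b) monoid_scheme \<Rightarrow> ('g \<Rightarrow> 'x::metric_space \<Rightarrow> 'x) \<Rightarrow> real
    \<Rightarrow> 'g set \<Rightarrow> 'g \<Rightarrow> 'x \<Rightarrow> bool" where
  "E_reduced G act \<delta> E t x\<^sub>0 \<longleftrightarrow> x\<^sub>0 \<in> C_set act \<delta> E \<and>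
     dist (act t x\<^sub>0) x\<^sub>0 = (INF ef \<in> E \<times> E. dist (act (fst ef \<otimes>\<^bsub>G\<^esub> t \<otimes>\<^bsub>G\<^esub> snd ef) x\<^sub>0) x\<^sub>0)"

end

theory Submission
  imports Defs
begin

lemma gromov2: "2 * gromov x p q = dist p x + dist q x - dist p q"
  by (simp add: gromov_def)

lemma gromov_comm: "gromov x p q = gromov x q p"
  by (simp add: gromov_def dist_commute add.commute)

lemma gromov_nonneg: "0 \<le> gromov x p q"
  using dist_triangle[of p q x] gromov2[of x p q] by (simp add: dist_commute)

lemma gromov_le1: "gromov x p q \<le> dist p x"
  using dist_triangle[of q x p] gromov2[of x p q] by (simp add: dist_commute)

lemma gromov_le2: "gromov x p q \<le> dist q x"
  using dist_triangle[of p x q] gromov2[of x p q] by (simp add: dist_commute)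

lemma gromov_sum: "gromov x p q + gromov p x q = dist p x"
  using gromov2[of x p q] gromov2[of p x q] by (simp add: dist_commute)

lemma dist_gromov: "dist p q = dist p x + dist q x - 2 * gromov x p q"
  using gromov2[of x p q] by linarith

lemma gromov_base_lip: "\<bar>gromov x p q - gromov y p q\<bar> \<le> dist x y"
  using dist_triangle[of p x y] dist_triangle[of p y x] dist_triangle[of q x y] dist_triangle[of q y x]
  using gromov2[of x p q] gromov2[of y p q] gromov2[of x p' q]
  unfolding abs_le_iff by (auto simp: dist_commute)

lemma gromov_arg_lip: "\<bar>gromov x p q - gromov x p' q\<bar> \<le> dist p p'"
  using dist_triangle[of p x p'] dist_triangle[of p' x p] dist_triangle[of p q p'] dist_triangle[of p' q p]
  using gromov2[of x p q] gromov2[of y p q] gromov2[of x p' q]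
  unfolding abs_le_iff by (auto simp: dist_commute)

lemma gromov_move:
  "gromov x p q \<le> gromov y p' q' + dist x y + dist p p' + dist q q'"
proof -
  have "\<bar>gromov x p q - gromov y p q\<bar> \<le> dist x y" by (rule gromov_base_lip)
  moreover have "\<bar>gromov y p q - gromov y p' q\<bar> \<le> dist p p'" by (rule gromov_arg_lip)
  moreover have "\<bar>gromov y q p' - gromov y q' p'\<bar> \<le> dist q q'" by (rule gromov_arg_lip)
  ultimately show ?thesis by (simp add: gromov_comm[of y q p'] gromov_comm[of y q' p'] abs_le_iff)
qed

lemma hyp4:
  assumes "hyperbolic_space TYPE('x::metric_space) \<delta>"
  shows "gromov (x::'x) p r \<ge> min (gromov x p q) (gromov x q r) - \<delta>"
  using assms unfolding hyperbolic_space_def by blast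

lemma hyp_delta: "hyperbolic_space TYPE('x::metric_space) \<delta> \<Longrightarrow> \<delta> \<ge> 0"
  unfolding hyperbolic_space_def by blast

lemma hyp4_3:
  assumes "hyperbolic_space TYPE('x::metric_space) \<delta>"
  shows "gromov (x::'x) a d \<ge> min (gromov x a b) (min (gromov x b c) (gromov x c d)) - 2*\<delta>"
proof -
  have 1: "gromov x a d \<ge> min (gromov x a b) (gromov x b d) - \<delta>" by (rule hyp4[OF assms])
  have 2: "gromov x b d \<ge> min (gromov x b c) (gromov x c d) - \<delta>" by (rule hyp4[OF assms])
  have "\<delta> \<ge> 0" using hyp_delta[OF assms] .
  then show ?thesis using 1 2 by (simp add: min_def split: if_splits)
qed

lemma chain_fwd:
  fixes x :: "nat \<Rightarrow> 'x::metric_space"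
  assumes H: "hyperbolic_space TYPE('x) \<delta>" and c: "0 \<le> c"
   and loc: "\<And>i. 0 < i \<Longrightarrow> i < n \<Longrightarrow> gromov (x i) (x (i-1)) (x (Suc i)) \<le> c"
   and gap: "\<And>i. 0 < i \<Longrightarrow> i \<le> n \<Longrightarrow> dist (x i) (x (i-1)) > 2*c + 3*\<delta>"
  shows "Suc k \<le> n \<Longrightarrow> gromov (x k) (x 0) (x (Suc k)) \<le> c + \<delta>"
proof (induction k)
  case 0
  have "gromov (x 0) (x 0) (x (Suc 0)) = 0" using gromov2[of "x 0" "x 0" "x (Suc 0)"] by (simp add: dist_commute)
  then show ?case using c hyp_delta[OF H] by simp
next
  case (Suc k)
  have IH: "gromov (x k) (x 0) (x (Suc k)) \<le> c + \<delta>" using Suc by simp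
  have s: "gromov (x k) (x (Suc k)) (x 0) + gromov (x (Suc k)) (x k) (x 0) = dist (x (Suc k)) (x k)"
    by (rule gromov_sum)
  have g: "dist (x (Suc k)) (x k) > 2*c + 3*\<delta>" using gap[of "Suc k"] Suc.prems by simp
  have h: "gromov (x (Suc k)) (x k) (x (Suc (Suc k))) \<ge>
      min (gromov (x (Suc k)) (x k) (x 0)) (gromov (x (Suc k)) (x 0) (x (Suc (Suc k)))) - \<delta>"
    by (rule hyp4[OF H])
  have l: "gromov (x (Suc k)) (x k) (x (Suc (Suc k))) \<le> c" using loc[of "Suc k"] Suc.prems by simp
  show ?case using IH s g h l gromov_comm[of "x k" "x (Suc k)" "x 0"] hyp_delta[OF H]
    by (simp add: min_def split: if_splits)
qed

lemma min3_aux: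
  fixes m A G B c d :: real
  assumes "m \<ge> min A (min G B) - 2*d" "m \<le> c" "A > c + 2*d" "B > c + 2*d"
  shows "G \<le> c + 2*d"
  using assms by (auto simp: min_def split: if_splits)

lemma chain_mid:
  fixes x :: "nat \<Rightarrow> 'x::metric_space"
  assumes H: "hyperbolic_space TYPE('x) \<delta>" and c: "0 \<le> c"
   and loc: "\<And>i. 0 < i \<Longrightarrow> i < n \<Longrightarrow> gromov (x i) (x (i-1)) (x (Suc i)) \<le> c"
   and gap: "\<And>i. 0 < i \<Longrightarrow> i \<le> n \<Longrightarrow> dist (x i) (x (i-1)) > 2*c + 3*\<delta>"
   and i: "0 < i" "i < n"
  shows "gromov (x i) (x 0) (x n) \<le> c + 2*\<delta>"
proof -
  have f: "gromov (x (i-1)) (x 0) (x (Suc (i-1))) \<le> c + \<delta>"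
    by (rule chain_fwd[OF H c loc gap]) (use i in auto)
  have s1: "gromov (x (i-1)) (x i) (x 0) + gromov (x i) (x (i-1)) (x 0) = dist (x i) (x (i-1))"
    by (rule gromov_sum)
  have g1: "dist (x i) (x (i-1)) > 2*c + 3*\<delta>" using gap[of i] i by simp
  have A: "gromov (x i) (x (i-1)) (x 0) > c + 2*\<delta>"
    using f s1 g1 gromov_comm[of "x (i-1)" "x i" "x 0"] i by simp
  define y where "y j = x (n - j)" for j
  have locy: "gromov (y j) (y (j-1)) (y (Suc j)) \<le> c" if "0 < j" "j < n" for j
  proof -
    have 1: "gromov (x (n-j)) (x (n-j-1)) (x (Suc (n-j))) \<le> c" using loc[of "n-j"] that by simp
    have e: "y j = x (n-j)" "y (j-1) = x (Suc (n-j))" "y (Suc j) = x (n-j-1)"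
      unfolding y_def using that by (auto simp: Suc_diff_Suc Suc_diff_le)
    show ?thesis unfolding e using 1 gromov_comm[of "x (n-j)" "x (n - j - 1)" "x (Suc (n - j))"] by linarith
  qed
  have gapy: "dist (y j) (y (j-1)) > 2*c + 3*\<delta>" if "0 < j" "j \<le> n" for j
  proof -
    have "dist (x (Suc (n-j))) (x (Suc (n-j) - 1)) > 2*c + 3*\<delta>" using gap[of "Suc (n-j)"] that by simp
    moreover have "n - (j-1) = Suc (n-j)" using that by auto
    ultimately show ?thesis unfolding y_def by (simp add: dist_commute)
  qed
  have f2: "gromov (y (n-i-1)) (y 0) (y (Suc (n-i-1))) \<le> c + \<delta>"
    by (rule chain_fwd[OF H c locy gapy]) (use i in auto)
  have e1: "y (n-i-1) = x (Suc i)" "y 0 = x n" "y (Suc (n-i-1)) = x i"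
    unfolding y_def using i by (auto simp: Suc_diff_Suc)
  have f2': "gromov (x (Suc i)) (x n) (x i) \<le> c + \<delta>" using f2 e1 by simp
  have s2: "gromov (x (Suc i)) (x i) (x n) + gromov (x i) (x (Suc i)) (x n) = dist (x i) (x (Suc i))"
    by (rule gromov_sum)
  have g2: "dist (x (Suc i)) (x i) > 2*c + 3*\<delta>" using gap[of "Suc i"] i by simp
  have B: "gromov (x i) (x n) (x (Suc i)) > c + 2*\<delta>"
    using f2' s2 g2 gromov_comm[of "x (Suc i)" "x i" "x n"] gromov_comm[of "x i" "x (Suc i)" "x n"]
    by (simp add: dist_commute)
  have h: "gromov (x i) (x (i-1)) (x (Suc i)) \<ge>
     min (gromov (x i) (x (i-1)) (x 0)) (min (gromov (x i) (x 0) (x n)) (gromov (x i) (x n) (x (Suc i)))) - 2*\<delta>"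
    by (rule hyp4_3[OF H])
  have l: "gromov (x i) (x (i-1)) (x (Suc i)) \<le> c" using loc i by simp
  show ?thesis using min3_aux[OF h l A B] .
qed

lemma chain_dist:
  fixes x :: "nat \<Rightarrow> 'x::metric_space"
  assumes H: "hyperbolic_space TYPE('x) \<delta>" and c: "0 \<le> c"
   and loc: "\<And>i. 0 < i \<Longrightarrow> i < n \<Longrightarrow> gromov (x i) (x (i-1)) (x (Suc i)) \<le> c"
   and gap: "\<And>i. 0 < i \<Longrightarrow> i \<le> n \<Longrightarrow> dist (x i) (x (i-1)) \<ge> \<tau>"
   and tau: "\<tau> > 2*c + 3*\<delta>"
  shows "k \<le> n \<Longrightarrow> dist (x k) (x 0) \<ge> real k * (\<tau> - 2*c - 2*\<delta>)"
proof (induction k)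
  case 0
  then show ?case by simp
next
  case (Suc k)
  have gap': "\<And>i. 0 < i \<Longrightarrow> i \<le> n \<Longrightarrow> dist (x i) (x (i-1)) > 2*c + 3*\<delta>"
  proof -
    fix i :: nat assume "0 < i" "i \<le> n"
    then show "dist (x i) (x (i-1)) > 2*c + 3*\<delta>" using gap[of i] tau by linarith
  qed
  have f: "gromov (x k) (x 0) (x (Suc k)) \<le> c + \<delta>"
    by (rule chain_fwd[OF H c loc gap']) (use Suc in auto)
  have d: "dist (x (Suc k)) (x 0) = dist (x (Suc k)) (x k) + dist (x 0) (x k) - 2 * gromov (x k) (x (Suc k)) (x 0)"
    by (rule dist_gromov)
  have g: "dist (x (Suc k)) (x k) \<ge> \<tau>" using gap[of "Suc k"] Suc.prems by simp
  have IH: "dist (x k) (x 0) \<ge> real k * (\<tau> - 2*c - 2*\<delta>)" using Suc by simp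
  have e: "real (Suc k) * (\<tau> - 2*c - 2*\<delta>) = real k * (\<tau> - 2*c - 2*\<delta>) + (\<tau> - 2*c - 2*\<delta>)"
    by (simp add: algebra_simps)
  have e2: "dist (x 0) (x k) = dist (x k) (x 0)" by (rule dist_commute)
  show ?case using d g IH f gromov_comm[of "x k" "x (Suc k)" "x 0"] e e2 by linarith
qed

definition aligned :: "(real \<Rightarrow> 'x::metric_space) \<Rightarrow> real \<Rightarrow> bool" where
  "aligned \<gamma> K \<longleftrightarrow> (\<forall>a b. dist (\<gamma> a) (\<gamma> b) \<le> \<bar>a - b\<bar>) \<and>
     (\<forall>a b c. a \<le> b \<longrightarrow> b \<le> c \<longrightarrow> gromov (\<gamma> b) (\<gamma> a) (\<gamma> c) \<le> K)"

lemma geodesic_aligned: "geodesic_line \<gamma> \<Longrightarrow> aligned \<gamma> 0"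
  unfolding aligned_def geodesic_line_def
proof (intro conjI allI impI)
  fix a b c :: real assume g: "\<forall>s t. dist (\<gamma> s) (\<gamma> t) = \<bar>s - t\<bar>" and ab: "a \<le> b" and bc: "b \<le> c"
  have "2 * gromov (\<gamma> b) (\<gamma> a) (\<gamma> c) = \<bar>a - b\<bar> + \<bar>c - b\<bar> - \<bar>a - c\<bar>"
    using gromov2[of "\<gamma> b" "\<gamma> a" "\<gamma> c"] g by simp
  also have "\<dots> = 0" using ab bc by simp
  finally show "gromov (\<gamma> b) (\<gamma> a) (\<gamma> c) \<le> 0" by simp
qed simp

lemma arclength_lip:
  assumes "arclength_param \<gamma>" "a \<le> b"
  shows "dist (\<gamma> a) (\<gamma> b) \<le> b - a"
proof -
  have mem: "[a, b] \<in> {ts. sorted ts \<and> set ts \<subseteq> {a..b}}" using assms(2) by auto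
  have "ereal (\<Sum>i<length [a,b] - 1. dist (\<gamma> ([a,b] ! i)) (\<gamma> ([a,b] ! Suc i))) \<le> path_length \<gamma> a b"
    unfolding path_length_def by (rule SUP_upper[OF mem])
  also have "\<dots> = ereal (b - a)" using assms unfolding arclength_param_def by blast
  finally show ?thesis by simp
qed

definition locgood :: "(real \<Rightarrow> 'x::metric_space) \<Rightarrow> real \<Rightarrow> bool" where
  "locgood \<gamma> \<delta> \<longleftrightarrow> (\<forall>a b. dist (\<gamma> a) (\<gamma> b) \<le> \<bar>a - b\<bar>) \<and>
     (\<forall>a b. \<bar>a - b\<bar> \<le> 200 * \<delta> \<longrightarrow> \<bar>a - b\<bar> \<le> dist (\<gamma> a) (\<gamma> b) + \<delta>)"

lemma lqg_locgood:
  assumes "local_quasi_geodesic (200 * \<delta>) \<delta> \<gamma>"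
  shows "locgood \<gamma> \<delta>"
  unfolding locgood_def
proof (intro conjI allI impI)
  have ap: "arclength_param \<gamma>" using assms unfolding local_quasi_geodesic_def by blast
  fix a b
  show "dist (\<gamma> a) (\<gamma> b) \<le> \<bar>a - b\<bar>"
  proof (cases "a \<le> b")
    case True then show ?thesis using arclength_lip[OF ap True] by simp
  next
    case False then show ?thesis using arclength_lip[OF ap, of b a] by (simp add: dist_commute)
  qed
next
  fix a b :: real assume ab: "\<bar>a - b\<bar> \<le> 200 * \<delta>"
  have ap: "arclength_param \<gamma>" using assms unfolding local_quasi_geodesic_def by blast
  have loc: "\<And>a b. a \<le> b \<Longrightarrow> b - a \<le> 200*\<delta> \<Longrightarrow> path_length \<gamma> a b \<le> ereal (dist (\<gamma> a) (\<gamma> b) + \<delta>)"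
    using assms unfolding local_quasi_geodesic_def by blast
  have ar: "\<And>a b. a \<le> b \<Longrightarrow> path_length \<gamma> a b = ereal (b - a)"
    using ap unfolding arclength_param_def by blast
  show "\<bar>a - b\<bar> \<le> dist (\<gamma> a) (\<gamma> b) + \<delta>"
  proof (cases "a \<le> b")
    case True then show ?thesis using loc[OF True] ar[OF True] ab by simp
  next
    case False then show ?thesis using loc[of b a] ar[of b a] ab by (simp add: dist_commute)
  qed
qed

lemma locgood_reflect: "locgood \<gamma> \<delta> \<Longrightarrow> locgood (\<lambda>s. \<gamma> (- s)) \<delta>"
  unfolding locgood_def
proof (intro conjI allI impI)
  fix a b :: real
  assume H: "(\<forall>a b. dist (\<gamma> a) (\<gamma> b) \<le> \<bar>a - b\<bar>) \<and>
     (\<forall>a b. \<bar>a - b\<bar> \<le> 200 * \<delta> \<longrightarrow> \<bar>a - b\<bar> \<le> dist (\<gamma> a) (\<gamma> b) + \<delta>)"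
  show "dist (\<gamma> (- a)) (\<gamma> (- b)) \<le> \<bar>a - b\<bar>" using H[THEN conjunct1, rule_format, of "-a" "-b"] by simp
  assume "\<bar>a - b\<bar> \<le> 200 * \<delta>"
  then show "\<bar>a - b\<bar> \<le> dist (\<gamma> (- a)) (\<gamma> (- b)) + \<delta>"
    using H[THEN conjunct2, rule_format, of "-a" "-b"] by (simp add: abs_minus_commute)
qed

lemma local3:
  assumes "locgood \<gamma> \<delta>" "u \<le> w" "w \<le> z" "z - u \<le> 200 * \<delta>"
  shows "gromov (\<gamma> w) (\<gamma> u) (\<gamma> z) \<le> \<delta> / 2"
proof -
  have "dist (\<gamma> u) (\<gamma> w) \<le> w - u" "dist (\<gamma> z) (\<gamma> w) \<le> z - w"
    using assms(1-3) unfolding locgood_def by (metis abs_of_nonpos diff_le_0_iff_le minus_diff_eq,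
        metis abs_of_nonneg diff_ge_0_iff_ge)
  moreover have "z - u \<le> dist (\<gamma> u) (\<gamma> z) + \<delta>"
    using assms unfolding locgood_def by (metis abs_minus_commute abs_of_nonneg diff_ge_0_iff_ge order_trans)
  ultimately show ?thesis using gromov2[of "\<gamma> w" "\<gamma> u" "\<gamma> z"] by (simp add: dist_commute)
qed

lemma locgood_lower:
  assumes "locgood \<gamma> \<delta>" "\<bar>a - b\<bar> \<le> 200 * \<delta>"
  shows "\<bar>a - b\<bar> - \<delta> \<le> dist (\<gamma> a) (\<gamma> b)"
  using assms unfolding locgood_def by force

lemma seg_chain:
  fixes \<gamma> :: "real \<Rightarrow> 'x::metric_space"
  assumes H: "hyperbolic_space TYPE('x) \<delta>" and dpos: "\<delta> > 0" and G: "locgood \<gamma> \<delta>"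
    and ac: "c - a \<ge> 50 * \<delta>"
  shows "\<exists>h. 50 * \<delta> \<le> h \<and> h \<le> 100 * \<delta> \<and> gromov (\<gamma> (c - h)) (\<gamma> a) (\<gamma> c) \<le> 3/2 * \<delta>"
proof -
  define n where "n = nat \<lceil>(c - a) / (100 * \<delta>)\<rceil>"
  have r0: "(c - a) / (100 * \<delta>) > 0" using dpos ac by (simp add: divide_pos_pos)
  have n1: "n \<ge> 1" unfolding n_def using r0 by linarith
  have nge: "real n \<ge> (c - a) / (100 * \<delta>)" unfolding n_def by linarith
  have nlt: "real n < (c - a) / (100 * \<delta>) + 1" unfolding n_def using r0 by linarith
  define h where "h = (c - a) / real n"
  have npos: "real n > 0" using n1 by simp
  have hn: "h * real n = c - a" unfolding h_def using npos by simp
  have hle: "h \<le> 100 * \<delta>"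
  proof -
    have "c - a \<le> 100 * \<delta> * real n" using nge dpos by (simp add: pos_divide_le_eq mult.commute)
    then show ?thesis unfolding h_def using npos by (simp add: pos_divide_le_eq mult.commute)
  qed
  have hge: "h \<ge> 50 * \<delta>"
  proof (cases "n = 1")
    case True then show ?thesis unfolding h_def using ac by simp
  next
    case False
    then have "real n \<ge> 2" using n1 by simp
    have "real n - 1 < (c - a) / (100 * \<delta>)" using nlt by simp
    then have "100 * \<delta> * (real n - 1) < c - a" using dpos by (simp add: pos_less_divide_eq mult.commute)
    moreover have "real n \<le> 2 * (real n - 1)" using \<open>real n \<ge> 2\<close> by simp
    moreover have "50 * \<delta> * real n \<le> 50 * \<delta> * (2 * (real n - 1))"
      using mult_left_mono[OF \<open>real n \<le> 2 * (real n - 1)\<close>, of "50 * \<delta>"] dpos by simp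
    ultimately have "50 * \<delta> * real n < c - a" by linarith
    then show ?thesis unfolding h_def using npos by (simp add: pos_le_divide_eq)
  qed
  define x where "x i = \<gamma> (a + real i * h)" for i
  have loc: "gromov (x i) (x (i-1)) (x (Suc i)) \<le> \<delta>/2" if "0 < i" "i < n" for i
  proof -
    have e: "real (i - 1) = real i - 1" using that by simp
    show ?thesis unfolding x_def e
      by (rule local3[OF G]) (use hge hle dpos in \<open>auto simp: algebra_simps\<close>)
  qed
  have gap: "dist (x i) (x (i-1)) > 2*(\<delta>/2) + 3*\<delta>" if "0 < i" "i \<le> n" for i
  proof -
    have e: "real (i - 1) = real i - 1" using that by simp
    have "\<bar>(a + real i * h) - (a + (real i - 1) * h)\<bar> - \<delta> \<le> dist (x i) (x (i-1))"
      unfolding x_def e by (rule locgood_lower[OF G]) (use hge hle dpos in \<open>auto simp: algebra_simps\<close>)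
    moreover have "\<bar>(a + real i * h) - (a + (real i - 1) * h)\<bar> = h" using hge dpos by (simp add: algebra_simps)
    ultimately show ?thesis using hge dpos by simp
  qed
  have "gromov (x (n-1)) (x 0) (x (Suc (n-1))) \<le> \<delta>/2 + \<delta>"
    by (rule chain_fwd[OF H _ loc gap]) (use dpos n1 in auto)
  moreover have "x (Suc (n-1)) = \<gamma> c" unfolding x_def using n1 hn by (simp add: algebra_simps)
  moreover have "x (n-1) = \<gamma> (c - h)" unfolding x_def using n1 hn by (simp add: of_nat_diff algebra_simps)
  moreover have "x 0 = \<gamma> a" unfolding x_def by simp
  ultimately show ?thesis using hge hle by (intro exI[of _ h]) simp
qed

lemma seg_chain_rev:
  fixes \<gamma> :: "real \<Rightarrow> 'x::metric_space"
  assumes H: "hyperbolic_space TYPE('x) \<delta>" and dpos: "\<delta> > 0" and G: "locgood \<gamma> \<delta>"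
    and ac: "c - a \<ge> 50 * \<delta>"
  shows "\<exists>h. 50 * \<delta> \<le> h \<and> h \<le> 100 * \<delta> \<and> gromov (\<gamma> (a + h)) (\<gamma> c) (\<gamma> a) \<le> 3/2 * \<delta>"
proof -
  have "\<exists>h. 50 * \<delta> \<le> h \<and> h \<le> 100 * \<delta> \<and>
      gromov ((\<lambda>s. \<gamma> (- s)) (-a - h)) ((\<lambda>s. \<gamma> (- s)) (-c)) ((\<lambda>s. \<gamma> (- s)) (-a)) \<le> 3/2 * \<delta>"
    by (rule seg_chain[OF H dpos locgood_reflect[OF G]]) (use ac in simp)
  then obtain h where "50 * \<delta> \<le> h" "h \<le> 100 * \<delta>"
      "gromov ((\<lambda>s. \<gamma> (- s)) (-a - h)) ((\<lambda>s. \<gamma> (- s)) (-c)) ((\<lambda>s. \<gamma> (- s)) (-a)) \<le> 3/2 * \<delta>"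
    by blast
  then show ?thesis by (intro exI[of _ h]) (simp add: add.commute)
qed

lemma locgood_aligned:
  fixes \<gamma> :: "real \<Rightarrow> 'x::metric_space"
  assumes H: "hyperbolic_space TYPE('x) \<delta>" and dpos: "\<delta> > 0" and G: "locgood \<gamma> \<delta>"
  shows "aligned \<gamma> (5/2 * \<delta>)"
  unfolding aligned_def
proof (intro conjI allI impI)
  fix a b :: real show "dist (\<gamma> a) (\<gamma> b) \<le> \<bar>a - b\<bar>" using G unfolding locgood_def by blast
next
  fix a b c :: real assume ab: "a \<le> b" and bc: "b \<le> c"
  let ?x = "\<gamma> a" and ?y = "\<gamma> b" and ?z = "\<gamma> c"
  show "gromov ?y ?x ?z \<le> 5/2 * \<delta>"
  proof (cases "c - a \<le> 200 * \<delta>")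
    case True
    then show ?thesis using local3[OF G ab bc] dpos by simp
  next
    case False
    have W1: "\<exists>h. 50 * \<delta> \<le> h \<and> h \<le> 100 * \<delta> \<and> gromov ?y (\<gamma> (b - h)) ?x \<ge> 47/2 * \<delta> * 2"
      if ba: "b - a \<ge> 50 * \<delta>"
    proof -
      obtain h where h: "50 * \<delta> \<le> h" "h \<le> 100 * \<delta>" "gromov (\<gamma> (b - h)) ?x ?y \<le> 3/2 * \<delta>"
        using seg_chain[OF H dpos G ba] by blast
      have s: "gromov (\<gamma> (b - h)) ?y ?x + gromov ?y (\<gamma> (b - h)) ?x = dist ?y (\<gamma> (b - h))"
        by (rule gromov_sum)
      have d: "\<bar>b - (b - h)\<bar> - \<delta> \<le> dist ?y (\<gamma> (b - h))"
        by (rule locgood_lower[OF G]) (use h dpos in auto)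
      show ?thesis using h s d gromov_comm[of "\<gamma> (b - h)" ?y ?x] by (intro exI[of _ h]) simp
    qed
    have W2: "\<exists>h. 50 * \<delta> \<le> h \<and> h \<le> 100 * \<delta> \<and> gromov ?y ?z (\<gamma> (b + h)) \<ge> 47/2 * \<delta> * 2"
      if cb: "c - b \<ge> 50 * \<delta>"
    proof -
      obtain h where h: "50 * \<delta> \<le> h" "h \<le> 100 * \<delta>" "gromov (\<gamma> (b + h)) ?z ?y \<le> 3/2 * \<delta>"
        using seg_chain_rev[OF H dpos G cb] by blast
      have s: "gromov (\<gamma> (b + h)) ?y ?z + gromov ?y (\<gamma> (b + h)) ?z = dist ?y (\<gamma> (b + h))"
        by (rule gromov_sum)
      have d: "\<bar>b - (b + h)\<bar> - \<delta> \<le> dist ?y (\<gamma> (b + h))"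
        by (rule locgood_lower[OF G]) (use h dpos in auto)
      show ?thesis using h s d gromov_comm[of "\<gamma> (b + h)" ?y ?z] gromov_comm[of ?y ?z "\<gamma> (b + h)"]
        by (intro exI[of _ h]) simp
    qed
    consider "b - a \<ge> 50 * \<delta>" "c - b \<ge> 50 * \<delta>" | "b - a < 50 * \<delta>" | "c - b < 50 * \<delta>" by linarith
    then show ?thesis
    proof cases
      case 1
      obtain h1 where h1: "50 * \<delta> \<le> h1" "h1 \<le> 100 * \<delta>" "gromov ?y (\<gamma> (b - h1)) ?x \<ge> 47/2 * \<delta> * 2"
        using W1 1 by blast
      obtain h2 where h2: "50 * \<delta> \<le> h2" "h2 \<le> 100 * \<delta>" "gromov ?y ?z (\<gamma> (b + h2)) \<ge> 47/2 * \<delta> * 2"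
        using W2 1 by blast
      have l: "gromov ?y (\<gamma> (b - h1)) (\<gamma> (b + h2)) \<le> \<delta>/2"
        by (rule local3[OF G]) (use h1 h2 in auto)
      have hh: "gromov ?y (\<gamma> (b - h1)) (\<gamma> (b + h2)) \<ge> min (gromov ?y (\<gamma> (b - h1)) ?x)
          (min (gromov ?y ?x ?z) (gromov ?y ?z (\<gamma> (b + h2)))) - 2 * \<delta>"
        by (rule hyp4_3[OF H])
      show ?thesis using l hh h1 h2 dpos by (simp add: min_def split: if_splits)
    next
      case 2
      then have "c - b \<ge> 50 * \<delta>" using False dpos by linarith
      then obtain h2 where h2: "50 * \<delta> \<le> h2" "h2 \<le> 100 * \<delta>" "gromov ?y ?z (\<gamma> (b + h2)) \<ge> 47/2 * \<delta> * 2"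
        using W2 by blast
      have l: "gromov ?y ?x (\<gamma> (b + h2)) \<le> \<delta>/2"
        by (rule local3[OF G]) (use h2 2 ab in auto)
      have hh: "gromov ?y ?x (\<gamma> (b + h2)) \<ge> min (gromov ?y ?x ?z) (gromov ?y ?z (\<gamma> (b + h2))) - \<delta>"
        by (rule hyp4[OF H])
      show ?thesis using l hh h2 dpos by (simp add: min_def split: if_splits)
    next
      case 3
      then have "b - a \<ge> 50 * \<delta>" using False dpos by linarith
      then obtain h1 where h1: "50 * \<delta> \<le> h1" "h1 \<le> 100 * \<delta>" "gromov ?y (\<gamma> (b - h1)) ?x \<ge> 47/2 * \<delta> * 2"
        using W1 by blast
      have l: "gromov ?y (\<gamma> (b - h1)) ?z \<le> \<delta>/2"
        by (rule local3[OF G]) (use h1 3 bc in auto)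
      have hh: "gromov ?y (\<gamma> (b - h1)) ?z \<ge> min (gromov ?y (\<gamma> (b - h1)) ?x) (gromov ?y ?x ?z) - \<delta>"
        by (rule hyp4[OF H])
      show ?thesis using l hh h1 dpos by (simp add: min_def split: if_splits)
    qed
  qed
qed

lemma act_one: "isometric_action G act \<Longrightarrow> act \<one>\<^bsub>G\<^esub> x = x"
  unfolding isometric_action_def by blast

lemma act_mult: "isometric_action G act \<Longrightarrow> g \<in> carrier G \<Longrightarrow> h \<in> carrier G \<Longrightarrow>
    act (g \<otimes>\<^bsub>G\<^esub> h) x = act g (act h x)"
  unfolding isometric_action_def by blast

lemma act_iso: "isometric_action G act \<Longrightarrow> g \<in> carrier G \<Longrightarrow> dist (act g x) (act g y) = dist x y"
  unfolding isometric_action_def by blast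

lemma act_group: "isometric_action G act \<Longrightarrow> group G"
  unfolding isometric_action_def by blast

lemma act_inv_right: assumes "isometric_action G act" "g \<in> carrier G"
  shows "act g (act (inv\<^bsub>G\<^esub> g) x) = x"
proof -
  have gr: "group G" using act_group[OF assms(1)] .
  have ic: "inv\<^bsub>G\<^esub> g \<in> carrier G" using group.inv_closed[OF gr assms(2)] .
  have "act (g \<otimes>\<^bsub>G\<^esub> inv\<^bsub>G\<^esub> g) x = act g (act (inv\<^bsub>G\<^esub> g) x)"
    by (rule act_mult[OF assms(1) assms(2) ic])
  moreover have "g \<otimes>\<^bsub>G\<^esub> inv\<^bsub>G\<^esub> g = \<one>\<^bsub>G\<^esub>" using group.r_inv[OF gr assms(2)] .
  ultimately show ?thesis using act_one[OF assms(1)] by simp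
qed

lemma act_inv_left: assumes "isometric_action G act" "g \<in> carrier G"
  shows "act (inv\<^bsub>G\<^esub> g) (act g x) = x"
proof -
  have gr: "group G" using act_group[OF assms(1)] .
  have ic: "inv\<^bsub>G\<^esub> g \<in> carrier G" using group.inv_closed[OF gr assms(2)] .
  have "act (inv\<^bsub>G\<^esub> g \<otimes>\<^bsub>G\<^esub> g) x = act (inv\<^bsub>G\<^esub> g) (act g x)"
    by (rule act_mult[OF assms(1) ic assms(2)])
  moreover have "inv\<^bsub>G\<^esub> g \<otimes>\<^bsub>G\<^esub> g = \<one>\<^bsub>G\<^esub>" using group.l_inv[OF gr assms(2)] .
  ultimately show ?thesis using act_one[OF assms(1)] by simp
qed

lemma gromov_act: "isometric_action G act \<Longrightarrow> g \<in> carrier G \<Longrightarrow>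
    gromov (act g x) (act g p) (act g q) = gromov x p q"
  unfolding gromov_def isometric_action_def by simp

lemma subgroup_pow_closed:
  assumes "subgroup E G" "f \<in> E"
  shows "f [^]\<^bsub>G\<^esub> (n::nat) \<in> E"
proof (induction n)
  case 0 then show ?case using subgroup.one_closed[OF assms(1)] by simp
next
  case (Suc n) then show ?case using subgroup.m_closed[OF assms(1)] assms(2) by simp
qed

lemma subgroup_carrier: "subgroup E G \<Longrightarrow> f \<in> E \<Longrightarrow> f \<in> carrier G"
  using subgroup.subset by blast

lemma subgroup_inv: "subgroup E G \<Longrightarrow> f \<in> E \<Longrightarrow> inv\<^bsub>G\<^esub> f \<in> E"
  by (rule subgroup.m_inv_closed)

lemma subgroup_mult: "subgroup E G \<Longrightarrow> f \<in> E \<Longrightarrow> g \<in> E \<Longrightarrow> f \<otimes>\<^bsub>G\<^esub> g \<in> E"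
  by (rule subgroup.m_closed)

lemma seq_equiv_sym: assumes "seq_equiv s u" shows "seq_equiv u s"
  unfolding seq_equiv_def
proof (intro allI)
  fix b M
  obtain N where N: "\<forall>m\<ge>N. \<forall>n\<ge>N. M \<le> gromov b (s m) (u n)" using assms unfolding seq_equiv_def by blast
  have "\<forall>m\<ge>N. \<forall>n\<ge>N. M \<le> gromov b (u m) (s n)"
  proof (intro allI impI)
    fix m n assume "m \<ge> N" "n \<ge> N"
    then have "M \<le> gromov b (s n) (u m)" using N by blast
    then show "M \<le> gromov b (u m) (s n)" using gromov_comm[of b "s n" "u m"] by linarith
  qed
  then show "\<exists>N. \<forall>m\<ge>N. \<forall>n\<ge>N. M \<le> gromov b (u m) (s n)" by blast
qed

lemma seq_equiv_trans:
  assumes H: "hyperbolic_space TYPE('x::metric_space) \<delta>"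
    and su: "seq_equiv s u" and uw: "seq_equiv u (w :: nat \<Rightarrow> 'x)"
  shows "seq_equiv s w"
  unfolding seq_equiv_def
proof (intro allI)
  fix b M
  obtain N1 where N1: "\<forall>m\<ge>N1. \<forall>n\<ge>N1. gromov b (s m) (u n) \<ge> M + \<delta>"
    using su unfolding seq_equiv_def by blast
  obtain N2 where N2: "\<forall>m\<ge>N2. \<forall>n\<ge>N2. gromov b (u m) (w n) \<ge> M + \<delta>"
    using uw unfolding seq_equiv_def by blast
  define N where "N = max N1 N2"
  have "\<forall>m\<ge>N. \<forall>n\<ge>N. gromov b (s m) (w n) \<ge> M"
  proof (intro allI impI)
    fix m n assume m: "m \<ge> N" and n: "n \<ge> N"
    have 1: "gromov b (s m) (u N) \<ge> M + \<delta>" using N1 m unfolding N_def by auto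
    have 2: "gromov b (u N) (w n) \<ge> M + \<delta>" using N2 n unfolding N_def by auto
    have "gromov b (s m) (w n) \<ge> min (gromov b (s m) (u N)) (gromov b (u N) (w n)) - \<delta>"
      by (rule hyp4[OF H])
    then show "gromov b (s m) (w n) \<ge> M" using 1 2 by linarith
  qed
  then show "\<exists>N. \<forall>m\<ge>N. \<forall>n\<ge>N. M \<le> gromov b (s m) (w n)" by blast
qed

lemma conv_equiv_self: "converges_at_infinity s \<Longrightarrow> seq_equiv s s"
  unfolding converges_at_infinity_def seq_equiv_def by blast

lemma equiv_act:
  assumes A: "isometric_action G act" and g: "g \<in> carrier G" and su: "seq_equiv s u"
  shows "seq_equiv (\<lambda>n. act g (s n)) (\<lambda>n. act g (u n))"
  unfolding seq_equiv_def
proof (intro allI)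
  fix b M
  obtain N where N: "\<forall>m\<ge>N. \<forall>n\<ge>N. gromov (act (inv\<^bsub>G\<^esub> g) b) (s m) (u n) \<ge> M"
    using su unfolding seq_equiv_def by blast
  have "gromov b (act g (s m)) (act g (u n)) = gromov (act (inv\<^bsub>G\<^esub> g) b) (s m) (u n)" for m n
    using gromov_act[OF A g, of "act (inv\<^bsub>G\<^esub> g) b" "s m" "u n"] act_inv_right[OF A g] by simp
  then show "\<exists>N. \<forall>m\<ge>N. \<forall>n\<ge>N. M \<le> gromov b (act g (s m)) (act g (u n))" using N by auto
qed

lemma conv_act:
  assumes A: "isometric_action G act" and g: "g \<in> carrier G" and s: "converges_at_infinity s"
  shows "converges_at_infinity (\<lambda>n. act g (s n))"
  using equiv_act[OF A g conv_equiv_self[OF s]] unfolding seq_equiv_def converges_at_infinity_def .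

lemma ends_image:
  assumes H: "hyperbolic_space TYPE('x::metric_space) \<delta>"
    and A: "isometric_action G (act :: 'g \<Rightarrow> 'x \<Rightarrow> 'x)" and sg: "subgroup E G" and f: "f \<in> E"
    and L: "limit_set act E = {\<xi>p, \<xi>m}" and xi: "\<xi> \<in> limit_set act E" and u: "u \<in> \<xi>"
    and P: "P \<in> \<xi>p" and M: "M \<in> \<xi>m"
  shows "seq_equiv (\<lambda>n. act f (u n)) P \<or> seq_equiv (\<lambda>n. act f (u n)) M"
proof -
  have fc: "f \<in> carrier G" using subgroup_carrier[OF sg f] .
  from xi have xib: "\<xi> \<in> gromov_boundary TYPE('x)" and
    "\<exists>h x. (\<forall>n. h n \<in> E) \<and> (\<lambda>n. act (h n) x) \<in> \<xi>" unfolding limit_set_def by auto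
  then obtain h x where h: "\<forall>n. h n \<in> E" and hx: "(\<lambda>n. act (h n) x) \<in> \<xi>" by blast
  from xib obtain s where s: "converges_at_infinity s" and xis: "\<xi> = {u. converges_at_infinity u \<and> seq_equiv s u}"
    unfolding gromov_boundary_def by blast
  define Hs where "Hs = (\<lambda>n. act (h n) x)"
  have sH: "seq_equiv s Hs" and Hc: "converges_at_infinity Hs" using hx xis unfolding Hs_def by auto
  have su: "seq_equiv s u" using u xis by auto
  have uH: "seq_equiv u Hs" using seq_equiv_trans[OF H seq_equiv_sym[OF su] sH] .
  define H' where "H' = (\<lambda>n. act f (Hs n))"
  have H'c: "converges_at_infinity H'" unfolding H'_def by (rule conv_act[OF A fc Hc])
  have H'eq: "H' = (\<lambda>n. act (f \<otimes>\<^bsub>G\<^esub> h n) x)"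
    unfolding H'_def Hs_def using act_mult[OF A fc] h subgroup_carrier[OF sg] by auto
  define \<zeta> where "\<zeta> = {w. converges_at_infinity w \<and> seq_equiv H' w}"
  have zb: "\<zeta> \<in> gromov_boundary TYPE('x)" unfolding gromov_boundary_def \<zeta>_def using H'c by blast
  have H'z: "H' \<in> \<zeta>" unfolding \<zeta>_def using H'c conv_equiv_self[OF H'c] by blast
  have "\<zeta> \<in> limit_set act E" unfolding limit_set_def
    using zb H'z H'eq h subgroup_mult[OF sg f] by (intro CollectI conjI exI[of _ "\<lambda>n. f \<otimes>\<^bsub>G\<^esub> h n"] exI[of _ x]) auto
  then have z: "\<zeta> = \<xi>p \<or> \<zeta> = \<xi>m" using L by auto
  have fu: "seq_equiv (\<lambda>n. act f (u n)) H'" unfolding H'_def by (rule equiv_act[OF A fc uH])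
  show ?thesis
  proof (cases "\<zeta> = \<xi>p")
    case True
    then have "seq_equiv H' P" using P unfolding \<zeta>_def by auto
    then show ?thesis using seq_equiv_trans[OF H fu] by blast
  next
    case False
    then have "\<zeta> = \<xi>m" using z by blast
    then have "seq_equiv H' M" using M unfolding \<zeta>_def by auto
    then show ?thesis using seq_equiv_trans[OF H fu] by blast
  qed
qed

lemma aligned_lip: "aligned \<gamma> K \<Longrightarrow> dist (\<gamma> a) (\<gamma> b) \<le> \<bar>a - b\<bar>"
  unfolding aligned_def by blast

lemma aligned_al: "aligned \<gamma> K \<Longrightarrow> a \<le> b \<Longrightarrow> b \<le> c \<Longrightarrow> gromov (\<gamma> b) (\<gamma> a) (\<gamma> c) \<le> K"
  unfolding aligned_def by blast

lemma aligned_cont: assumes "aligned \<gamma> K" shows "continuous_on S \<gamma>"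
proof -
  have "1-lipschitz_on S \<gamma>" unfolding lipschitz_on_def
    using aligned_lip[OF assms] by (simp add: dist_real_def)
  then show ?thesis by (rule lipschitz_on_continuous_on)
qed

lemma proj_line:
  fixes \<gamma> :: "real \<Rightarrow> 'x::metric_space"
  assumes H: "hyperbolic_space TYPE('x) \<delta>" and al: "aligned \<gamma> K" and K: "K \<ge> 0"
    and ab: "a \<le> b" and pc: "gromov p (\<gamma> a) (\<gamma> b) \<le> c"
  shows "\<exists>r. dist p (\<gamma> r) \<le> c + 2*K + 2*\<delta>"
proof -
  let ?x = "\<gamma> a" and ?y = "\<gamma> b"
  define r0 where "r0 = gromov ?x p ?y"
  have c1: "continuous_on {a..b} (\<lambda>t. dist (\<gamma> t) ?x)"
    by (intro continuous_intros aligned_cont[OF al])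
  have "(\<lambda>t. dist (\<gamma> t) ?x) a \<le> r0" unfolding r0_def using gromov_nonneg by simp
  moreover have "r0 \<le> (\<lambda>t. dist (\<gamma> t) ?x) b" unfolding r0_def using gromov_le2[of ?x p ?y] by simp
  ultimately obtain t where t: "a \<le> t" "t \<le> b" "dist (\<gamma> t) ?x = r0"
    using IVT'[OF _ _ ab c1] by blast
  let ?q = "\<gamma> t"
  have aq: "gromov ?q ?x ?y \<le> K" using aligned_al[OF al t(1) t(2)] .
  have s1: "gromov ?x ?q ?y + gromov ?q ?x ?y = dist ?q ?x" by (rule gromov_sum)
  have hh: "gromov ?x p ?q \<ge> min (gromov ?x p ?y) (gromov ?x ?y ?q) - \<delta>" by (rule hyp4[OF H])
  have cm: "gromov ?x ?y ?q = gromov ?x ?q ?y" by (rule gromov_comm)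
  have s2: "gromov ?x p ?y + gromov p ?x ?y = dist p ?x" by (rule gromov_sum)
  have dd: "dist p ?q = dist p ?x + dist ?q ?x - 2 * gromov ?x p ?q" by (rule dist_gromov)
  have "gromov ?x p ?q \<ge> r0 - K - \<delta>" using hh cm s1 aq t(3) K unfolding r0_def by (simp add: min_def split: if_splits)
  then have "dist p ?q \<le> c + 2*K + 2*\<delta>" using dd s2 pc t(3) unfolding r0_def by linarith
  then show ?thesis by blast
qed

lemma stability:
  fixes \<gamma> :: "real \<Rightarrow> 'x::metric_space" and act :: "'g \<Rightarrow> 'x \<Rightarrow> 'x"
  assumes H: "hyperbolic_space TYPE('x) \<delta>" and A: "isometric_action G act" and sg: "subgroup E G"
    and f: "f \<in> E" and al: "aligned \<gamma> K" and K: "K \<ge> 0" and he: "has_endpoints act E \<gamma>"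
  shows "\<exists>r. dist (act f (\<gamma> s)) (\<gamma> r) \<le> 3*K + 4*\<delta>"
proof -
  have fc: "f \<in> carrier G" using subgroup_carrier[OF sg f] .
  obtain \<xi>p \<xi>m where bp: "\<xi>p \<in> gromov_boundary TYPE('x)" and bm: "\<xi>m \<in> gromov_boundary TYPE('x)"
    and P: "(\<lambda>n. \<gamma> (real n)) \<in> \<xi>p" and M: "(\<lambda>n. \<gamma> (- real n)) \<in> \<xi>m"
    and L: "{\<xi>p, \<xi>m} = limit_set act E"
    using he unfolding has_endpoints_def by blast
  define Pn where "Pn = (\<lambda>n::nat. \<gamma> (real n))"
  define Mn where "Mn = (\<lambda>n::nat. \<gamma> (- real n))"
  define U where "U = (\<lambda>n. act f (Pn n))"
  define W where "W = (\<lambda>n. act f (Mn n))"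
  have L': "limit_set act E = {\<xi>p, \<xi>m}" using L by simp
  have U: "seq_equiv U Pn \<or> seq_equiv U Mn" unfolding U_def
    using ends_image[OF H A sg f L' _ P P M] L' unfolding Pn_def Mn_def by auto
  have W: "seq_equiv W Pn \<or> seq_equiv W Mn" unfolding W_def
    using ends_image[OF H A sg f L' _ M P M] L' unfolding Pn_def Mn_def by auto
  define p where "p = act f (\<gamma> s)"
  have WU: "gromov p (W n) (U n) \<le> K" if "real n \<ge> \<bar>s\<bar>" for n
  proof -
    have "gromov (\<gamma> s) (\<gamma> (- real n)) (\<gamma> (real n)) \<le> K"
      by (rule aligned_al[OF al]) (use that in auto)
    then show ?thesis unfolding p_def W_def U_def Pn_def Mn_def using gromov_act[OF A fc] by simp
  qed
  define Mb where "Mb = K + 2*\<delta> + 1"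
  have ev: "\<exists>N. \<forall>m\<ge>N. \<forall>n\<ge>N. gromov p (X m) (Y n) \<ge> Mb" if "seq_equiv X Y" for X Y :: "nat \<Rightarrow> 'x"
    using that unfolding seq_equiv_def by blast
  have d0: "\<delta> \<ge> 0" using hyp_delta[OF H] .
  have key: "\<exists>N::nat. gromov p (Mn N) (Pn N) \<le> K + 2*\<delta> \<and> real N \<ge> \<bar>s\<bar>"
  proof -
    obtain X where UX: "seq_equiv U X" and X: "X = Pn \<or> X = Mn" using U by blast
    obtain Y where WY: "seq_equiv W Y" and Y: "Y = Pn \<or> Y = Mn" using W by blast
    obtain N1 where N1: "\<forall>m\<ge>N1. \<forall>n\<ge>N1. gromov p (U m) (X n) \<ge> Mb" using ev[OF UX] by blast
    obtain N2 where N2: "\<forall>m\<ge>N2. \<forall>n\<ge>N2. gromov p (W m) (Y n) \<ge> Mb" using ev[OF WY] by blast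
    define N where "N = max (max N1 N2) (nat \<lceil>\<bar>s\<bar>\<rceil>)"
    have Ns: "real N \<ge> \<bar>s\<bar>" unfolding N_def by linarith
    have g1: "gromov p (U N) (X N) \<ge> Mb" using N1 unfolding N_def by auto
    have g2: "gromov p (W N) (Y N) \<ge> Mb" using N2 unfolding N_def by auto
    have wu: "gromov p (W N) (U N) \<le> K" using WU[OF Ns] .
    have g1': "gromov p (X N) (U N) \<ge> Mb" using g1 gromov_comm[of p "U N" "X N"] by simp
    show ?thesis
    proof (cases "X = Y")
      case True
      have "gromov p (W N) (U N) \<ge> min (gromov p (W N) (X N)) (gromov p (X N) (U N)) - \<delta>"
        by (rule hyp4[OF H])
      then have False using True g1' g2 wu d0 unfolding Mb_def by (simp add: min_def split: if_splits)
      then show ?thesis by blast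
    next
      case False
      then have XY: "(X = Pn \<and> Y = Mn) \<or> (X = Mn \<and> Y = Pn)" using X Y by blast
      have h3: "gromov p (W N) (U N) \<ge> min (gromov p (W N) (Y N)) (min (gromov p (Y N) (X N)) (gromov p (X N) (U N))) - 2*\<delta>"
        by (rule hyp4_3[OF H])
      have "gromov p (Y N) (X N) \<le> K + 2*\<delta>"
        using h3 g1' g2 wu d0 unfolding Mb_def by (simp add: min_def split: if_splits)
      then have "gromov p (Mn N) (Pn N) \<le> K + 2*\<delta>" using XY gromov_comm[of p "Mn N" "Pn N"] by auto
      then show ?thesis using Ns by blast
    qed
  qed
  then obtain N :: nat where N: "gromov p (\<gamma> (- real N)) (\<gamma> (real N)) \<le> K + 2*\<delta>"
    unfolding Mn_def Pn_def by blast
  obtain r where "dist p (\<gamma> r) \<le> (K + 2*\<delta>) + 2*K + 2*\<delta>"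
    using proj_line[OF H al K _ N] by auto
  then show ?thesis unfolding p_def by (intro exI[of _ r]) simp
qed

lemma tl_le: "translation_length act g \<le> dist (act g x) x"
  unfolding translation_length_def
  by (rule cINF_lower) (auto intro: bdd_belowI[of _ 0])

lemma tl_ge: "(\<And>x. c \<le> dist (act g x) x) \<Longrightarrow> c \<le> translation_length act g"
  unfolding translation_length_def by (rule cINF_greatest) auto

lemma disp_inv:
  assumes A: "isometric_action G act" and g: "g \<in> carrier G"
  shows "dist (act (inv\<^bsub>G\<^esub> g) x) x = dist (act g x) x"
proof -
  have "dist (act (inv\<^bsub>G\<^esub> g) x) x = dist (act g (act (inv\<^bsub>G\<^esub> g) x)) (act g x)"
    using act_iso[OF A g] by simp
  also have "\<dots> = dist x (act g x)" using act_inv_right[OF A g] by simp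
  finally show ?thesis by (simp add: dist_commute)
qed

lemma tl_inv:
  assumes A: "isometric_action G act" and g: "g \<in> carrier G"
  shows "translation_length act (inv\<^bsub>G\<^esub> g) = translation_length act g"
  unfolding translation_length_def using disp_inv[OF A g] by simp

lemma act_pow_Suc:
  assumes A: "isometric_action G act" and f: "f \<in> carrier G"
  shows "act (f [^]\<^bsub>G\<^esub> Suc k) y = act (f [^]\<^bsub>G\<^esub> k) (act f y)"
proof -
  have gr: "group G" using act_group[OF A] .
  have pc: "f [^]\<^bsub>G\<^esub> k \<in> carrier G" using monoid.nat_pow_closed[OF group.is_monoid[OF gr] f] .
  show ?thesis using act_mult[OF A pc f] by simp
qed

lemma pow_closed: assumes "isometric_action G act" "f \<in> carrier G" shows "f [^]\<^bsub>G\<^esub> (k::nat) \<in> carrier G"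
proof -
  have gr: "group G" using act_group[OF assms(1)] .
  show ?thesis using monoid.nat_pow_closed[OF group.is_monoid[OF gr] assms(2)] .
qed

lemma pow_disp:
  assumes A: "isometric_action G act" and f: "f \<in> carrier G"
  shows "dist (act (f [^]\<^bsub>G\<^esub> k) y) y \<le> real k * dist (act f y) y"
proof (induction k)
  case 0 then show ?case using act_one[OF A] by simp
next
  case (Suc k)
  have "dist (act (f [^]\<^bsub>G\<^esub> Suc k) y) y \<le>
      dist (act (f [^]\<^bsub>G\<^esub> k) (act f y)) (act (f [^]\<^bsub>G\<^esub> k) y) + dist (act (f [^]\<^bsub>G\<^esub> k) y) y"
    unfolding act_pow_Suc[OF A f] by (rule dist_triangle)
  also have "dist (act (f [^]\<^bsub>G\<^esub> k) (act f y)) (act (f [^]\<^bsub>G\<^esub> k) y) = dist (act f y) y"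
    using act_iso[OF A pow_closed[OF A f]] by simp
  finally show ?case using Suc by (simp add: algebra_simps)
qed

lemma midpoint_tl:
  fixes act :: "'g \<Rightarrow> 'x::metric_space \<Rightarrow> 'x"
  assumes Geo: "geodesic_space TYPE('x)" and H: "hyperbolic_space TYPE('x) \<delta>"
    and A: "isometric_action G act" and g: "g \<in> carrier G"
  shows "translation_length act g \<le> dist (act g (act g p)) p + 2*\<delta>"
proof -
  let ?gp = "act g p"
  define \<tau> where "\<tau> = dist p ?gp"
  obtain c :: "real \<Rightarrow> 'x" where c0: "c 0 = p" and c1: "c \<tau> = ?gp"
    and ci: "\<forall>s\<in>{0..\<tau>}. \<forall>t\<in>{0..\<tau>}. dist (c s) (c t) = \<bar>s - t\<bar>"
    using Geo unfolding geodesic_space_def \<tau>_def by blast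
  have tpos: "\<tau> \<ge> 0" unfolding \<tau>_def by simp
  define m where "m = c (\<tau>/2)"
  have mp: "dist m p = \<tau>/2"
  proof -
    have "dist (c (\<tau>/2)) (c 0) = \<bar>\<tau>/2 - 0\<bar>" using ci tpos by auto
    then show ?thesis unfolding m_def c0 using tpos by simp
  qed
  have mgp: "dist m ?gp = \<tau>/2"
  proof -
    have "dist (c (\<tau>/2)) (c \<tau>) = \<bar>\<tau>/2 - \<tau>\<bar>" using ci tpos by auto
    then show ?thesis unfolding m_def c1 using tpos by simp
  qed
  define \<eta> where "\<eta> = dist (act g ?gp) p"
  have gm_gp: "dist (act g m) ?gp = \<tau>/2" using act_iso[OF A g, of m p] mp by simp
  have p_gm: "dist p (act g m) \<le> \<eta> + \<tau>/2"
  proof -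
    have "dist p (act g m) \<le> dist p (act g ?gp) + dist (act g ?gp) (act g m)" by (rule dist_triangle)
    also have "dist (act g ?gp) (act g m) = dist ?gp m" using act_iso[OF A g] by simp
    finally show ?thesis using mgp unfolding \<eta>_def by (simp add: dist_commute)
  qed
  have h: "gromov ?gp m (act g m) \<ge> min (gromov ?gp m p) (gromov ?gp p (act g m)) - \<delta>" by (rule hyp4[OF H])
  have a1: "2 * gromov ?gp m p = \<tau>" using gromov2[of ?gp m p] mp mgp unfolding \<tau>_def by (simp add: dist_commute)
  have a2: "2 * gromov ?gp p (act g m) \<ge> \<tau> - \<eta>" using gromov2[of ?gp p "act g m"] gm_gp p_gm
    unfolding \<tau>_def by (simp add: dist_commute)
  have e0: "\<eta> \<ge> 0" unfolding \<eta>_def by simp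
  have "2 * gromov ?gp m (act g m) \<ge> \<tau> - \<eta> - 2*\<delta>" using h a1 a2 e0 by (simp add: min_def split: if_splits)
  moreover have "dist m (act g m) = dist m ?gp + dist (act g m) ?gp - 2 * gromov ?gp m (act g m)"
    by (rule dist_gromov)
  ultimately have "dist m (act g m) \<le> \<eta> + 2*\<delta>" using mgp gm_gp by linarith
  then have "dist (act g m) m \<le> \<eta> + 2*\<delta>" by (simp add: dist_commute)
  then show ?thesis using tl_le[of act g m] unfolding \<eta>_def by linarith
qed

lemma archimedean_aux:
  fixes A B C :: real
  assumes "\<And>k::nat. real k * A \<le> real k * B + C"
  shows "A \<le> B"
proof (rule ccontr)
  assume "\<not> A \<le> B"
  then have d: "A - B > 0" by simp
  obtain k :: nat where k: "C / (A - B) < real k" using reals_Archimedean2 by blast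
  then have "C < real k * (A - B)" using d by (simp add: pos_divide_less_eq mult.commute)
  then show False using assms[of k] by (simp add: algebra_simps)
qed

lemma same_side_gromov:
  assumes al: "aligned \<gamma> K" and side: "(s0 \<le> a \<and> s0 \<le> b) \<or> (a \<le> s0 \<and> b \<le> s0)"
  shows "gromov (\<gamma> s0) (\<gamma> a) (\<gamma> b) \<ge> min (dist (\<gamma> a) (\<gamma> s0)) (dist (\<gamma> b) (\<gamma> s0)) - K"
proof -
  have sA: "gromov (\<gamma> s0) (\<gamma> a) (\<gamma> b) + gromov (\<gamma> a) (\<gamma> s0) (\<gamma> b) = dist (\<gamma> a) (\<gamma> s0)"
    by (rule gromov_sum)
  have sB: "gromov (\<gamma> s0) (\<gamma> b) (\<gamma> a) + gromov (\<gamma> b) (\<gamma> s0) (\<gamma> a) = dist (\<gamma> b) (\<gamma> s0)"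
    by (rule gromov_sum)
  have c1: "gromov (\<gamma> s0) (\<gamma> b) (\<gamma> a) = gromov (\<gamma> s0) (\<gamma> a) (\<gamma> b)" by (rule gromov_comm)
  have c2: "gromov (\<gamma> a) (\<gamma> s0) (\<gamma> b) = gromov (\<gamma> a) (\<gamma> b) (\<gamma> s0)" by (rule gromov_comm)
  have c3: "gromov (\<gamma> b) (\<gamma> s0) (\<gamma> a) = gromov (\<gamma> b) (\<gamma> a) (\<gamma> s0)" by (rule gromov_comm)
  consider "s0 \<le> a" "a \<le> b" | "s0 \<le> b" "b \<le> a" | "a \<le> b" "b \<le> s0" | "b \<le> a" "a \<le> s0"
    using side by linarith
  then show ?thesis
  proof cases
    case 1
    then have "gromov (\<gamma> a) (\<gamma> s0) (\<gamma> b) \<le> K" by (rule aligned_al[OF al])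
    then show ?thesis using sA by (simp add: min_def)
  next
    case 2
    then have "gromov (\<gamma> b) (\<gamma> s0) (\<gamma> a) \<le> K" by (rule aligned_al[OF al])
    then show ?thesis using sB c1 by (simp add: min_def)
  next
    case 3
    then have "gromov (\<gamma> b) (\<gamma> a) (\<gamma> s0) \<le> K" by (rule aligned_al[OF al])
    then show ?thesis using sB c1 c3 by (simp add: min_def)
  next
    case 4
    then have "gromov (\<gamma> a) (\<gamma> b) (\<gamma> s0) \<le> K" by (rule aligned_al[OF al])
    then show ?thesis using sA c2 by (simp add: min_def)
  qed
qed

lemma opp_side_gromov:
  assumes al: "aligned \<gamma> K" and side: "(a \<le> s0 \<and> s0 \<le> b) \<or> (b \<le> s0 \<and> s0 \<le> a)"
  shows "gromov (\<gamma> s0) (\<gamma> a) (\<gamma> b) \<le> K"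
  using side aligned_al[OF al, of a s0 b] aligned_al[OF al, of b s0 a] gromov_comm[of "\<gamma> s0" "\<gamma> a" "\<gamma> b"]
  by auto

lemma opposite:
  fixes \<gamma> :: "real \<Rightarrow> 'x::metric_space" and act :: "'g \<Rightarrow> 'x \<Rightarrow> 'x"
  assumes Geo: "geodesic_space TYPE('x)" and H: "hyperbolic_space TYPE('x) \<delta>"
    and A: "isometric_action G act" and sg: "subgroup E G"
    and e: "e \<in> E" and al: "aligned \<gamma> K" and K: "K \<ge> 0" and he: "has_endpoints act E \<gamma>"
    and tl: "translation_length act e > 20*K + 26*\<delta>"
  shows "\<exists>a b. dist (act e (\<gamma> s0)) (\<gamma> a) \<le> 3*K + 4*\<delta> \<and> dist (act (inv\<^bsub>G\<^esub> e) (\<gamma> s0)) (\<gamma> b) \<le> 3*K + 4*\<delta>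
     \<and> ((a < s0 \<and> s0 < b) \<or> (b < s0 \<and> s0 < a))"
proof -
  have ec: "e \<in> carrier G" using subgroup_carrier[OF sg e] .
  have ie: "inv\<^bsub>G\<^esub> e \<in> E" using subgroup_inv[OF sg e] .
  have iec: "inv\<^bsub>G\<^esub> e \<in> carrier G" using subgroup_carrier[OF sg ie] .
  obtain a where a: "dist (act e (\<gamma> s0)) (\<gamma> a) \<le> 3*K + 4*\<delta>" using stability[OF H A sg e al K he] by blast
  obtain b where b: "dist (act (inv\<^bsub>G\<^esub> e) (\<gamma> s0)) (\<gamma> b) \<le> 3*K + 4*\<delta>"
    using stability[OF H A sg ie al K he] by blast
  let ?q = "\<gamma> s0" and ?S = "3*K + 4*\<delta>"
  have "(a < s0 \<and> s0 < b) \<or> (b < s0 \<and> s0 < a)"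
  proof (rule ccontr)
    assume "\<not> ((a < s0 \<and> s0 < b) \<or> (b < s0 \<and> s0 < a))"
    then have side: "(s0 \<le> a \<and> s0 \<le> b) \<or> (a \<le> s0 \<and> b \<le> s0)" by linarith
    define \<tau> where "\<tau> = dist (act e ?q) ?q"
    have ti: "dist (act (inv\<^bsub>G\<^esub> e) ?q) ?q = \<tau>" unfolding \<tau>_def using disp_inv[OF A ec] .
    have ss: "gromov ?q (\<gamma> a) (\<gamma> b) \<ge> min (dist (\<gamma> a) ?q) (dist (\<gamma> b) ?q) - K"
      by (rule same_side_gromov[OF al side])
    have da: "dist (\<gamma> a) ?q \<ge> \<tau> - ?S" using dist_triangle[of "act e ?q" ?q "\<gamma> a"] a unfolding \<tau>_def
      by (simp add: dist_commute)
    have db: "dist (\<gamma> b) ?q \<ge> \<tau> - ?S" using dist_triangle[of "act (inv\<^bsub>G\<^esub> e) ?q" ?q "\<gamma> b"] b ti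
      by (simp add: dist_commute)
    have mv: "gromov ?q (\<gamma> a) (\<gamma> b) \<le> gromov ?q (act e ?q) (act (inv\<^bsub>G\<^esub> e) ?q) + dist ?q ?q
        + dist (\<gamma> a) (act e ?q) + dist (\<gamma> b) (act (inv\<^bsub>G\<^esub> e) ?q)" by (rule gromov_move)
    have gg: "gromov ?q (act e ?q) (act (inv\<^bsub>G\<^esub> e) ?q) \<ge> \<tau> - K - 3*?S"
      using ss da db mv a b by (simp add: dist_commute min_def split: if_splits)
    have dd: "dist (act e ?q) (act (inv\<^bsub>G\<^esub> e) ?q) = \<tau> + \<tau> - 2 * gromov ?q (act e ?q) (act (inv\<^bsub>G\<^esub> e) ?q)"
      using dist_gromov[of "act e ?q" "act (inv\<^bsub>G\<^esub> e) ?q" ?q] ti unfolding \<tau>_def by simp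
    have "dist (act e (act e ?q)) ?q = dist (act (inv\<^bsub>G\<^esub> e) (act e (act e ?q))) (act (inv\<^bsub>G\<^esub> e) ?q)"
      using act_iso[OF A iec] by simp
    also have "\<dots> = dist (act e ?q) (act (inv\<^bsub>G\<^esub> e) ?q)" using act_inv_left[OF A ec] by simp
    finally have "dist (act e (act e ?q)) ?q \<le> 2*K + 6*?S" using dd gg by linarith
    then have "translation_length act e \<le> 2*K + 6*?S + 2*\<delta>" using midpoint_tl[OF Geo H A ec, of ?q] by linarith
    moreover have "2*K + 6*?S + 2*\<delta> = 20*K + 26*\<delta>" by (simp add: algebra_simps)
    ultimately show False using tl by linarith
  qed
  then show ?thesis using a b by blast
qed

lemma opposite_gromov:
  fixes \<gamma> :: "real \<Rightarrow> 'x::metric_space" and act :: "'g \<Rightarrow> 'x \<Rightarrow> 'x"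
  assumes al: "aligned \<gamma> K"
    and a: "dist (act e (\<gamma> s0)) (\<gamma> a) \<le> S" and b: "dist (act ie (\<gamma> s0)) (\<gamma> b) \<le> S"
    and side: "(a < s0 \<and> s0 < b) \<or> (b < s0 \<and> s0 < a)"
  shows "gromov (\<gamma> s0) (act ie (\<gamma> s0)) (act e (\<gamma> s0)) \<le> K + 2*S"
proof -
  have "gromov (\<gamma> s0) (\<gamma> a) (\<gamma> b) \<le> K" by (rule opp_side_gromov[OF al]) (use side in auto)
  moreover have "gromov (\<gamma> s0) (act e (\<gamma> s0)) (act ie (\<gamma> s0)) \<le> gromov (\<gamma> s0) (\<gamma> a) (\<gamma> b) + dist (\<gamma> s0) (\<gamma> s0)
        + dist (act e (\<gamma> s0)) (\<gamma> a) + dist (act ie (\<gamma> s0)) (\<gamma> b)" by (rule gromov_move)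
  ultimately show ?thesis using a b gromov_comm[of "\<gamma> s0" "act e (\<gamma> s0)" "act ie (\<gamma> s0)"] by simp
qed

lemma act_pow_one:
  assumes A: "isometric_action G act" and f: "f \<in> carrier G"
  shows "act (f [^]\<^bsub>G\<^esub> (1::nat)) y = act f y"
  using act_pow_Suc[OF A f, of 0 y] act_one[OF A] by simp

lemma orbit:
  fixes act :: "'g \<Rightarrow> 'x::metric_space \<Rightarrow> 'x"
  assumes H: "hyperbolic_space TYPE('x) \<delta>" and A: "isometric_action G act" and f: "f \<in> carrier G"
    and c: "c \<ge> 0" and loc1: "gromov q0 (act (inv\<^bsub>G\<^esub> f) q0) (act f q0) \<le> c"
    and tau: "dist (act f q0) q0 > 2*c + 3*\<delta>"
  shows "dist (act (f [^]\<^bsub>G\<^esub> k) q0) q0 \<ge> real k * (dist (act f q0) q0 - 2*c - 2*\<delta>)"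
    and "k \<ge> 1 \<Longrightarrow> gromov q0 (act f q0) (act (f [^]\<^bsub>G\<^esub> k) q0) \<ge> dist (act f q0) q0 - c - 2*\<delta>"
    and "dist (act f q0) q0 \<le> translation_length act f + 2*c + 2*\<delta>"
proof -
  define x where "x i = act (f [^]\<^bsub>G\<^esub> i) q0" for i :: nat
  have fi: "inv\<^bsub>G\<^esub> f \<in> carrier G" using group.inv_closed[OF act_group[OF A] f] .
  have x0: "x 0 = q0" unfolding x_def using act_one[OF A] by simp
  have x1: "x 1 = act f q0" unfolding x_def by (rule act_pow_one[OF A f])
  have xS: "x (Suc j) = act (f [^]\<^bsub>G\<^esub> j) (act f q0)" for j
    unfolding x_def by (rule act_pow_Suc[OF A f])
  have xP: "x j = act (f [^]\<^bsub>G\<^esub> Suc j) (act (inv\<^bsub>G\<^esub> f) q0)" for j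
  proof -
    have "act (f [^]\<^bsub>G\<^esub> Suc j) (act (inv\<^bsub>G\<^esub> f) q0) = act (f [^]\<^bsub>G\<^esub> j) (act f (act (inv\<^bsub>G\<^esub> f) q0))"
      by (rule act_pow_Suc[OF A f])
    also have "\<dots> = act (f [^]\<^bsub>G\<^esub> j) q0" by (simp only: act_inv_right[OF A f])
    finally show ?thesis unfolding x_def by simp
  qed
  have loc: "gromov (x i) (x (i-1)) (x (Suc i)) \<le> c" if "0 < i" for i
  proof -
    define j where "j = i - 1"
    have j: "i = Suc j" unfolding j_def using that by simp
    have e1: "x (i-1) = act (f [^]\<^bsub>G\<^esub> i) (act (inv\<^bsub>G\<^esub> f) q0)" unfolding j using xP[of j] by simp
    have e2: "x (Suc i) = act (f [^]\<^bsub>G\<^esub> i) (act f q0)" by (rule xS)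
    have e3: "x i = act (f [^]\<^bsub>G\<^esub> i) q0" by (simp only: x_def)
    have "gromov (x i) (x (i-1)) (x (Suc i)) = gromov q0 (act (inv\<^bsub>G\<^esub> f) q0) (act f q0)"
      unfolding e1 e2 e3 by (rule gromov_act[OF A pow_closed[OF A f]])
    then show ?thesis using loc1 by simp
  qed
  have gap: "dist (x i) (x (i-1)) = dist (act f q0) q0" if "0 < i" for i
  proof -
    define j where "j = i - 1"
    have j: "i = Suc j" unfolding j_def using that by simp
    have "dist (x (Suc j)) (x j) = dist (act (f [^]\<^bsub>G\<^esub> j) (act f q0)) (act (f [^]\<^bsub>G\<^esub> j) q0)"
      unfolding xS by (simp only: x_def)
    also have "\<dots> = dist (act f q0) q0" by (rule act_iso[OF A pow_closed[OF A f]])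
    finally show ?thesis unfolding j by simp
  qed
  let ?\<tau> = "dist (act f q0) q0"
  show D: "dist (act (f [^]\<^bsub>G\<^esub> k) q0) q0 \<ge> real k * (?\<tau> - 2*c - 2*\<delta>)" for k
  proof -
    have "dist (x k) (x 0) \<ge> real k * (?\<tau> - 2*c - 2*\<delta>)"
      by (rule chain_dist[OF H c, where n = k]) (use loc gap tau in auto)
    then show ?thesis unfolding x0 unfolding x_def .
  qed
  show "k \<ge> 1 \<Longrightarrow> gromov q0 (act f q0) (act (f [^]\<^bsub>G\<^esub> k) q0) \<ge> ?\<tau> - c - 2*\<delta>"
  proof -
    assume k: "k \<ge> 1"
    show ?thesis
    proof (cases "k = 1")
      case True
      have "gromov q0 (act f q0) (act f q0) = ?\<tau>" using gromov2[of q0 "act f q0" "act f q0"] by simp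
      moreover have "act (f [^]\<^bsub>G\<^esub> k) q0 = act f q0" using True act_pow_one[OF A f] by metis
      ultimately show ?thesis using c hyp_delta[OF H] by simp
    next
      case False
      then have k2: "1 < k" using k by simp
      have gap': "dist (x i) (x (i-1)) > 2*c + 3*\<delta>" if "0 < i" for i using gap[OF that] tau by simp
      have m: "gromov (x 1) (x 0) (x k) \<le> c + 2*\<delta>"
        by (rule chain_mid[OF H c, where n = k]) (use loc gap' k2 in auto)
      have m': "gromov (act f q0) q0 (x k) \<le> c + 2*\<delta>" using m unfolding x0 x1 .
      have s: "gromov q0 (act f q0) (x k) + gromov (act f q0) q0 (x k) = dist (act f q0) q0" by (rule gromov_sum)
      have "gromov q0 (act f q0) (x k) \<ge> ?\<tau> - c - 2*\<delta>" using m' s by linarith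
      then show ?thesis unfolding x_def .
    qed
  qed
  show "?\<tau> \<le> translation_length act f + 2*c + 2*\<delta>"
  proof -
    have "?\<tau> - 2*c - 2*\<delta> \<le> dist (act f y) y" for y
    proof (rule archimedean_aux[where C = "2 * dist y q0"])
      fix k :: nat
      have "dist (act (f [^]\<^bsub>G\<^esub> k) q0) q0 \<le> dist (act (f [^]\<^bsub>G\<^esub> k) q0) (act (f [^]\<^bsub>G\<^esub> k) y)
          + dist (act (f [^]\<^bsub>G\<^esub> k) y) y + dist y q0"
        using dist_triangle[of "act (f [^]\<^bsub>G\<^esub> k) q0" q0 "act (f [^]\<^bsub>G\<^esub> k) y"]
          dist_triangle[of "act (f [^]\<^bsub>G\<^esub> k) y" q0 y] by linarith
      also have "dist (act (f [^]\<^bsub>G\<^esub> k) q0) (act (f [^]\<^bsub>G\<^esub> k) y) = dist q0 y"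
        using act_iso[OF A pow_closed[OF A f]] by simp
      finally have "dist (act (f [^]\<^bsub>G\<^esub> k) q0) q0 \<le> real k * dist (act f y) y + 2 * dist y q0"
        using pow_disp[OF A f, of k y] by (simp add: dist_commute)
      then show "real k * (?\<tau> - 2*c - 2*\<delta>) \<le> real k * dist (act f y) y + 2 * dist y q0"
        using D[of k] by linarith
    qed
    then have "?\<tau> - 2*c - 2*\<delta> \<le> translation_length act f" by (rule tl_ge)
    then show ?thesis by linarith
  qed
qed

lemma archimedean_aux2:
  fixes A B C :: real
  assumes "\<And>k::nat. k \<ge> Kst \<Longrightarrow> real k * A \<le> real k * B + C"
  shows "A \<le> B"
proof (rule ccontr)
  assume "\<not> A \<le> B"
  then have d: "A - B > 0" by simp
  obtain k0 :: nat where k: "C / (A - B) < real k0" using reals_Archimedean2 by blast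
  define k where "k = max k0 Kst"
  have "real k0 \<le> real k" unfolding k_def by simp
  then have "C / (A - B) < real k" using k by linarith
  then have "C < real k * (A - B)" using d by (simp add: pos_divide_less_eq mult.commute)
  then show False using assms[of k] unfolding k_def by (simp add: algebra_simps)
qed

lemma hyperbolic_power_tl:
  fixes act :: "'g \<Rightarrow> 'x::metric_space \<Rightarrow> 'x"
  assumes A: "isometric_action G act" and g: "g \<in> carrier G" and hy: "hyperbolic_elem G act g"
  shows "\<exists>m::nat. translation_length act (g [^]\<^bsub>G\<^esub> m) > B"
proof -
  obtain x l where l: "l > 0" and lim: "(\<lambda>n. dist (act (g [^]\<^bsub>G\<^esub> (n::nat)) x) x / real n) \<longlonglongrightarrow> l"
    using hy unfolding hyperbolic_elem_def by blast
  have "eventually (\<lambda>n. l/2 < dist (act (g [^]\<^bsub>G\<^esub> (n::nat)) x) x / real n) sequentially"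
    by (rule order_tendstoD(1)[OF lim]) (use l in simp)
  then obtain N where N: "\<And>n. n \<ge> N \<Longrightarrow> l/2 < dist (act (g [^]\<^bsub>G\<^esub> (n::nat)) x) x / real n"
    unfolding eventually_sequentially by blast
  have gr: "group G" using act_group[OF A] .
  have low: "real m * (l/2) \<le> dist (act (g [^]\<^bsub>G\<^esub> m) y) y" if m: "m \<ge> 1" for m :: nat and y
  proof (rule archimedean_aux2[where Kst = "N + 1" and C = "2 * dist x y"])
    fix k :: nat assume k: "k \<ge> N + 1"
    have gm: "g [^]\<^bsub>G\<^esub> m \<in> carrier G" using pow_closed[OF A g] .
    have mk: "m * k \<ge> N" "m * k \<ge> 1" using m k
      by (metis add_leD1 le_trans mult_le_mono nat_mult_1, metis add_leD2 le_trans mult_le_mono nat_mult_1)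
    have mkpos: "real (m * k) > 0" using mk(2) by simp
    have "l/2 < dist (act (g [^]\<^bsub>G\<^esub> (m * k)) x) x / real (m * k)" using N[OF mk(1)] .
    then have a: "real (m * k) * (l/2) < dist (act (g [^]\<^bsub>G\<^esub> (m * k)) x) x"
      using mkpos by (simp add: pos_less_divide_eq mult.commute)
    have pp: "g [^]\<^bsub>G\<^esub> (m * k) = (g [^]\<^bsub>G\<^esub> m) [^]\<^bsub>G\<^esub> k"
      using monoid.nat_pow_pow[OF group.is_monoid[OF gr] g, of m k] by simp
    let ?h = "(g [^]\<^bsub>G\<^esub> m) [^]\<^bsub>G\<^esub> k"
    have hc: "?h \<in> carrier G" using pow_closed[OF A gm] .
    have "dist (act ?h x) x \<le> dist (act ?h x) (act ?h y) + dist (act ?h y) y + dist y x"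
      using dist_triangle[of "act ?h x" x "act ?h y"] dist_triangle[of "act ?h y" x y] by linarith
    also have "dist (act ?h x) (act ?h y) = dist x y" by (rule act_iso[OF A hc])
    finally have "dist (act ?h x) x \<le> real k * dist (act (g [^]\<^bsub>G\<^esub> m) y) y + 2 * dist x y"
      using pow_disp[OF A gm, of k y] by (simp add: dist_commute)
    then have "real (m * k) * (l/2) < real k * dist (act (g [^]\<^bsub>G\<^esub> m) y) y + 2 * dist x y"
      using a pp by simp
    then show "real k * (real m * (l/2)) \<le> real k * dist (act (g [^]\<^bsub>G\<^esub> m) y) y + 2 * dist x y"
      by (simp add: algebra_simps)
  qed
  obtain m0 :: nat where m0: "2 * \<bar>B\<bar> / l < real m0" using reals_Archimedean2 by blast
  define m where "m = m0 + 1"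
  have m1: "m \<ge> 1" unfolding m_def by simp
  have "2 * \<bar>B\<bar> < real m0 * l" using m0 l by (simp add: pos_divide_less_eq)
  then have mB: "real m * (l/2) > B" unfolding m_def using l by (simp add: algebra_simps)
  have "real m * (l/2) \<le> translation_length act (g [^]\<^bsub>G\<^esub> m)"
    by (rule tl_ge) (rule low[OF m1])
  then show ?thesis using mB by (intro exI[of _ m]) linarith
qed

lemma choose_e:
  fixes act :: "'g \<Rightarrow> 'x::metric_space \<Rightarrow> 'x"
  assumes A: "isometric_action G act" and lox: "loxodromic G act E" and eps: "\<epsilon> > 0"
  shows "\<exists>e\<in>E. translation_length act e > 200 * \<delta> \<and> translation_length act e < subgroup_trlen act \<delta> E + \<epsilon>"
proof -
  have sg: "subgroup E G" using lox unfolding loxodromic_def elementary_def by blast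
  obtain g where gE: "g \<in> E" and hy: "hyperbolic_elem G act g" using lox unfolding loxodromic_def by blast
  have gc: "g \<in> carrier G" using subgroup_carrier[OF sg gE] .
  obtain m where m: "translation_length act (g [^]\<^bsub>G\<^esub> (m::nat)) > 200 * \<delta>"
    using hyperbolic_power_tl[OF A gc hy] by blast
  define S where "S = {translation_length act g |g. g \<in> E \<and> translation_length act g > 200 * \<delta>}"
  have ne: "S \<noteq> {}" unfolding S_def using m subgroup_pow_closed[OF sg gE, of m] by blast
  have bb: "bdd_below S" unfolding S_def by (rule bdd_belowI[of _ "200 * \<delta>"]) auto
  have "Inf S < Inf S + \<epsilon>" using eps by simp
  then obtain t where "t \<in> S" "t < Inf S + \<epsilon>" using cInf_less_iff[OF ne bb] by blast
  then show ?thesis unfolding S_def subgroup_trlen_def by blast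
qed

lemma step_k:
  fixes \<gamma> :: "real \<Rightarrow> 'x::metric_space" and act :: "'g \<Rightarrow> 'x \<Rightarrow> 'x" and k :: nat
  assumes H: "hyperbolic_space TYPE('x) \<delta>" and A: "isometric_action G act" and sg: "subgroup E G"
    and f: "f \<in> E" and al: "aligned \<gamma> K" and K0: "K \<ge> 0" and he: "has_endpoints act E \<gamma>"
    and x0s: "dist x0 (\<gamma> s0) \<le> 40 * \<delta>" and tc: "t \<in> carrier G"
    and red: "\<forall>e\<in>E. dist (act t x0) x0 \<le> dist (act e (act t x0)) x0"
    and v: "v \<in> E"
    and cvS: "dist (act v (\<gamma> s0)) (\<gamma> cv) \<le> 3*K + 4*\<delta>"
    and afS: "dist (act f (\<gamma> s0)) (\<gamma> af) \<le> 3*K + 4*\<delta>"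
    and side_f: "(af \<le> s0 \<and> cv \<le> s0) \<or> (s0 \<le> af \<and> s0 \<le> cv)"
    and orb2: "gromov (\<gamma> s0) (act f (\<gamma> s0)) (act (f [^]\<^bsub>G\<^esub> k) (\<gamma> s0)) > K + 2*(3*K + 4*\<delta>)"
  shows "2 * (min (dist (act (f [^]\<^bsub>G\<^esub> k) x0) x0) (gromov x0 (act t x0) (act v x0)) - (10*K + 213*\<delta>))
           \<le> dist (act (f [^]\<^bsub>G\<^esub> k) x0) x0"
proof -
  let ?q = "\<gamma> s0" and ?S = "3*K + 4*\<delta>"
  let ?fk = "f [^]\<^bsub>G\<^esub> k"
  have d0: "\<delta> \<ge> 0" using hyp_delta[OF H] .
  have fc: "f \<in> carrier G" using subgroup_carrier[OF sg f] .
  have fkE: "?fk \<in> E" using subgroup_pow_closed[OF sg f] .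
  have fkc: "?fk \<in> carrier G" using subgroup_carrier[OF sg fkE] .
  have vc: "v \<in> carrier G" using subgroup_carrier[OF sg v] .
  obtain ak where ak: "dist (act ?fk ?q) (\<gamma> ak) \<le> ?S" using stability[OF H A sg fkE al K0 he] by blast
  have side_k: "(ak \<le> s0 \<and> cv \<le> s0) \<or> (s0 \<le> ak \<and> s0 \<le> cv)"
  proof (rule ccontr)
    assume "\<not> ?thesis"
    then have opp: "(ak \<le> s0 \<and> s0 \<le> af) \<or> (af \<le> s0 \<and> s0 \<le> ak)" using side_f by linarith
    have "gromov ?q (\<gamma> ak) (\<gamma> af) \<le> K" by (rule opp_side_gromov[OF al opp])
    moreover have "gromov ?q (act f ?q) (act ?fk ?q) \<le> gromov ?q (\<gamma> af) (\<gamma> ak) + dist ?q ?q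
       + dist (act f ?q) (\<gamma> af) + dist (act ?fk ?q) (\<gamma> ak)" by (rule gromov_move)
    ultimately show False using orb2 afS ak gromov_comm[of ?q "\<gamma> ak" "\<gamma> af"] by simp
  qed
  have ss: "gromov ?q (\<gamma> ak) (\<gamma> cv) \<ge> min (dist (\<gamma> ak) ?q) (dist (\<gamma> cv) ?q) - K"
    by (rule same_side_gromov[OF al]) (use side_k in auto)
  define R where "R = 40*\<delta> + ?S"
  have Rv: "R = 44*\<delta> + 3*K" unfolding R_def by simp
  define y where "y = act ?fk x0"
  define \<rho> where "\<rho> = dist y x0"
  define D where "D = gromov x0 (act t x0) (act v x0)"
  have yR: "dist y (\<gamma> ak) \<le> 40*\<delta> + ?S"
  proof -
    have "dist y (\<gamma> ak) \<le> dist y (act ?fk ?q) + dist (act ?fk ?q) (\<gamma> ak)" by (rule dist_triangle)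
    moreover have "dist y (act ?fk ?q) = dist x0 ?q" unfolding y_def by (rule act_iso[OF A fkc])
    ultimately show ?thesis using ak x0s by linarith
  qed
  have vR: "dist (act v x0) (\<gamma> cv) \<le> 40*\<delta> + ?S"
  proof -
    have "dist (act v x0) (\<gamma> cv) \<le> dist (act v x0) (act v ?q) + dist (act v ?q) (\<gamma> cv)" by (rule dist_triangle)
    moreover have "dist (act v x0) (act v ?q) = dist x0 ?q" by (rule act_iso[OF A vc])
    ultimately show ?thesis using cvS x0s by linarith
  qed
  have mv: "gromov ?q (\<gamma> ak) (\<gamma> cv) \<le> gromov x0 y (act v x0) + dist ?q x0 + dist (\<gamma> ak) y + dist (\<gamma> cv) (act v x0)"
    by (rule gromov_move)
  have dak: "dist (\<gamma> ak) ?q \<ge> \<rho> - R - 40*\<delta>"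
    using dist_triangle[of y x0 "\<gamma> ak"] dist_triangle[of "\<gamma> ak" x0 ?q] yR x0s R_def unfolding \<rho>_def
    by (simp add: dist_commute)
  have dcv: "dist (\<gamma> cv) ?q \<ge> dist (act v x0) x0 - R - 40*\<delta>"
    using dist_triangle[of "act v x0" x0 "\<gamma> cv"] dist_triangle[of "\<gamma> cv" x0 ?q] vR x0s R_def
    by (simp add: dist_commute)
  have Dle: "D \<le> dist (act v x0) x0" unfolding D_def by (rule gromov_le2)
  have g1: "gromov x0 y (act v x0) \<ge> min \<rho> (dist (act v x0) x0) - (K + 80*\<delta> + 3*R)"
  proof -
    have mm: "min (dist (\<gamma> ak) ?q) (dist (\<gamma> cv) ?q) \<ge> min \<rho> (dist (act v x0) x0) - R - 40*\<delta>"
      using dak dcv by (simp add: min_def split: if_splits)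
    have c1: "dist ?q x0 = dist x0 ?q" "dist (\<gamma> ak) y = dist y (\<gamma> ak)" "dist (\<gamma> cv) (act v x0) = dist (act v x0) (\<gamma> cv)"
      by (simp_all add: dist_commute)
    show ?thesis using ss mv x0s yR vR mm c1 R_def by linarith
  qed
  have h4: "gromov x0 y (act t x0) \<ge> min (gromov x0 y (act v x0)) (gromov x0 (act v x0) (act t x0)) - \<delta>"
    by (rule hyp4[OF H])
  have Dc: "gromov x0 (act v x0) (act t x0) = D" unfolding D_def by (rule gromov_comm)
  have B0: "K + 80*\<delta> + 3*R \<ge> 0" using K0 d0 Rv by simp
  have g2: "gromov x0 y (act t x0) \<ge> min \<rho> D - (K + 80*\<delta> + 3*R) - \<delta>"
    using h4 Dc g1 Dle B0 by (simp add: min_def split: if_splits)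
  have ifk: "inv\<^bsub>G\<^esub> ?fk \<in> E" using subgroup_inv[OF sg fkE] .
  have ifkc: "inv\<^bsub>G\<^esub> ?fk \<in> carrier G" using subgroup_carrier[OF sg ifk] .
  have "dist (act t x0) x0 \<le> dist (act (inv\<^bsub>G\<^esub> ?fk) (act t x0)) x0" using red ifk by blast
  also have "\<dots> = dist (act ?fk (act (inv\<^bsub>G\<^esub> ?fk) (act t x0))) (act ?fk x0)" using act_iso[OF A fkc] by simp
  also have "\<dots> = dist (act t x0) y" unfolding y_def using act_inv_right[OF A fkc] by simp
  finally have rd: "dist (act t x0) x0 \<le> dist (act t x0) y" .
  have dg: "dist (act t x0) y = dist (act t x0) x0 + dist y x0 - 2 * gromov x0 (act t x0) y" by (rule dist_gromov)
  have gc: "gromov x0 (act t x0) y = gromov x0 y (act t x0)" by (rule gromov_comm)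
  have "2 * gromov x0 y (act t x0) \<le> \<rho>" using rd dg gc unfolding \<rho>_def by linarith
  moreover have "2 * (min \<rho> D - (10*K + 213*\<delta>)) = 2 * min \<rho> D - 20*K - 426*\<delta>" by (simp add: algebra_simps)
  ultimately have "2 * (min \<rho> D - (10*K + 213*\<delta>)) \<le> \<rho>" using g2 Rv by linarith
  then show ?thesis unfolding \<rho>_def y_def D_def .
qed

lemma main_bound:
  fixes \<gamma> :: "real \<Rightarrow> 'x::metric_space" and act :: "'g \<Rightarrow> 'x \<Rightarrow> 'x"
  assumes Geo: "geodesic_space TYPE('x)" and H: "hyperbolic_space TYPE('x) \<delta>"
    and A: "isometric_action G act" and sg: "subgroup E G" and lox: "loxodromic G act E"
    and al: "aligned \<gamma> K" and K0: "K \<ge> 0" and Kb: "K \<le> 5/2 * \<delta>" and he: "has_endpoints act E \<gamma>"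
    and x0s: "dist x0 (\<gamma> s0) \<le> 40 * \<delta>" and tc: "t \<in> carrier G"
    and red: "\<forall>e\<in>E. dist (act t x0) x0 \<le> dist (act e (act t x0)) x0"
    and v: "v \<in> E"
  shows "gromov x0 (act t x0) (act v x0) \<le> subgroup_trlen act \<delta> E / 2 + 1500 * \<delta>"
proof (rule ccontr)
  define D where "D = gromov x0 (act t x0) (act v x0)"
  define TE where "TE = subgroup_trlen act \<delta> E"
  assume "\<not> ?thesis"
  then have DTE: "D > TE / 2 + 1500 * \<delta>" unfolding D_def TE_def by simp
  define \<epsilon> where "\<epsilon> = D - TE / 2 - 1500 * \<delta>"
  have eps: "\<epsilon> > 0" unfolding \<epsilon>_def using DTE by simp
  obtain e where e: "e \<in> E" and te1: "translation_length act e > 200 * \<delta>"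
    and te2: "translation_length act e < TE + \<epsilon>"
    using choose_e[OF A lox eps, of \<delta>] unfolding TE_def by blast
  have d0: "\<delta> \<ge> 0" using hyp_delta[OF H] .
  have gr: "group G" using act_group[OF A] .
  have tl_e: "translation_length act e > 20*K + 26*\<delta>" using te1 Kb d0 by linarith
  let ?q = "\<gamma> s0"
  define S where "S = 3*K + 4*\<delta>"
  obtain a b where a: "dist (act e ?q) (\<gamma> a) \<le> S" and b: "dist (act (inv\<^bsub>G\<^esub> e) ?q) (\<gamma> b) \<le> S"
    and ab: "(a < s0 \<and> s0 < b) \<or> (b < s0 \<and> s0 < a)"
    using opposite[OF Geo H A sg e al K0 he tl_e, of s0] unfolding S_def by blast
  obtain cv where cv: "dist (act v ?q) (\<gamma> cv) \<le> S" using stability[OF H A sg v al K0 he] unfolding S_def by blast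
  have ec: "e \<in> carrier G" using subgroup_carrier[OF sg e] .
  have ie: "inv\<^bsub>G\<^esub> e \<in> E" using subgroup_inv[OF sg e] .
  have gopp: "gromov ?q (act (inv\<^bsub>G\<^esub> e) ?q) (act e ?q) \<le> K + 2*S"
    by (rule opposite_gromov[where act = act and e = e and ie = "inv\<^bsub>G\<^esub> e" and \<gamma> = \<gamma>, OF al a b ab])
  have iie: "inv\<^bsub>G\<^esub> (inv\<^bsub>G\<^esub> e) = e" using group.inv_inv[OF gr ec] .
  have gopp': "gromov ?q (act (inv\<^bsub>G\<^esub> (inv\<^bsub>G\<^esub> e)) ?q) (act (inv\<^bsub>G\<^esub> e) ?q) \<le> K + 2*S"
    using gopp gromov_comm[of ?q "act (inv\<^bsub>G\<^esub> e) ?q" "act e ?q"] unfolding iie by simp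
  have tlie: "translation_length act (inv\<^bsub>G\<^esub> e) = translation_length act e" by (rule tl_inv[OF A ec])
  have "\<exists>f af. f \<in> E \<and> dist (act f ?q) (\<gamma> af) \<le> S \<and> ((af \<le> s0 \<and> cv \<le> s0) \<or> (s0 \<le> af \<and> s0 \<le> cv))
     \<and> gromov ?q (act (inv\<^bsub>G\<^esub> f) ?q) (act f ?q) \<le> K + 2*S \<and> translation_length act f = translation_length act e"
  proof (cases "a < s0 \<and> s0 < b")
    case True
    show ?thesis
    proof (cases "cv \<le> s0")
      case True
      then show ?thesis using e a gopp \<open>a < s0 \<and> s0 < b\<close> by (intro exI[of _ e] exI[of _ a]) auto
    next
      case False
      then show ?thesis using ie b gopp' tlie \<open>a < s0 \<and> s0 < b\<close>
        by (intro exI[of _ "inv\<^bsub>G\<^esub> e"] exI[of _ b]) auto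
    qed
  next
    case False
    then have ba: "b < s0 \<and> s0 < a" using ab by blast
    show ?thesis
    proof (cases "s0 \<le> cv")
      case True
      then show ?thesis using e a gopp ba by (intro exI[of _ e] exI[of _ a]) auto
    next
      case False
      then show ?thesis using ie b gopp' tlie ba
        by (intro exI[of _ "inv\<^bsub>G\<^esub> e"] exI[of _ b]) auto
    qed
  qed
  then obtain f af where fE: "f \<in> E" and afS: "dist (act f ?q) (\<gamma> af) \<le> S"
    and side_f: "(af \<le> s0 \<and> cv \<le> s0) \<or> (s0 \<le> af \<and> s0 \<le> cv)"
    and loc1: "gromov ?q (act (inv\<^bsub>G\<^esub> f) ?q) (act f ?q) \<le> K + 2*S"
    and tlf: "translation_length act f = translation_length act e" by blast
  have fc: "f \<in> carrier G" using subgroup_carrier[OF sg fE] .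
  define \<tau> where "\<tau> = dist (act f ?q) ?q"
  define cc where "cc = K + 2*S"
  have ccv: "cc = 7*K + 8*\<delta>" unfolding cc_def S_def by simp
  have cc0: "cc \<ge> 0" using ccv K0 d0 by simp
  have tau_ge: "\<tau> \<ge> translation_length act f" unfolding \<tau>_def by (rule tl_le)
  have tau: "\<tau> > 2*cc + 3*\<delta>" using tau_ge tlf te1 ccv Kb d0 by linarith
  have loc1': "gromov ?q (act (inv\<^bsub>G\<^esub> f) ?q) (act f ?q) \<le> cc" using loc1 unfolding cc_def .
  have tau': "dist (act f ?q) ?q > 2*cc + 3*\<delta>" using tau unfolding \<tau>_def .
  note O = orbit[OF H A fc cc0 loc1' tau']
  have O3: "\<tau> \<le> translation_length act f + 2*cc + 2*\<delta>" using O(3) unfolding \<tau>_def .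
  define B where "B = 10*K + 213*\<delta>"
  have B0: "B \<ge> 0" unfolding B_def using K0 d0 by simp
  define \<rho> where "\<rho> k = dist (act (f [^]\<^bsub>G\<^esub> (k::nat)) x0) x0" for k
  have step: "2 * (min (\<rho> k) D - B) \<le> \<rho> k" if k: "k \<ge> 1" for k
  proof -
    have "gromov ?q (act f ?q) (act (f [^]\<^bsub>G\<^esub> k) ?q) \<ge> \<tau> - cc - 2*\<delta>" using O(2)[OF k] unfolding \<tau>_def .
    then have "gromov ?q (act f ?q) (act (f [^]\<^bsub>G\<^esub> k) ?q) > cc" using tau d0 by linarith
    moreover have "cc = K + 2*(3*K + 4*\<delta>)" unfolding cc_def S_def ..
    ultimately have orb2: "gromov ?q (act f ?q) (act (f [^]\<^bsub>G\<^esub> k) ?q) > K + 2*(3*K + 4*\<delta>)" by simp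
    show ?thesis using step_k[OF H A sg fE al K0 he x0s tc red v cv[unfolded S_def] afS[unfolded S_def] side_f orb2]
      unfolding \<rho>_def D_def B_def .
  qed
  have fx1: "act (f [^]\<^bsub>G\<^esub> (1::nat)) x0 = act f x0" by (rule act_pow_one[OF A fc])
  have qx: "dist ?q x0 \<le> 40*\<delta>" using x0s by (simp add: dist_commute)
  have rho1: "\<rho> 1 \<le> \<tau> + 80*\<delta>"
  proof -
    have "dist (act f x0) x0 \<le> dist (act f x0) (act f ?q) + dist (act f ?q) ?q + dist ?q x0"
      using dist_triangle[of "act f x0" x0 "act f ?q"] dist_triangle[of "act f ?q" x0 ?q] by linarith
    moreover have "dist (act f x0) (act f ?q) = dist x0 ?q" by (rule act_iso[OF A fc])
    ultimately show ?thesis unfolding \<rho>_def \<tau>_def fx1 using x0s qx by linarith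
  qed
  have rhoS: "\<rho> (Suc k) \<le> \<rho> k + \<rho> 1" for k
  proof -
    have pc: "f [^]\<^bsub>G\<^esub> k \<in> carrier G" by (rule pow_closed[OF A fc])
    have e1: "act (f [^]\<^bsub>G\<^esub> Suc k) x0 = act (f [^]\<^bsub>G\<^esub> k) (act f x0)" by (rule act_pow_Suc[OF A fc])
    have "dist (act (f [^]\<^bsub>G\<^esub> k) (act f x0)) x0 \<le> dist (act (f [^]\<^bsub>G\<^esub> k) (act f x0)) (act (f [^]\<^bsub>G\<^esub> k) x0)
        + dist (act (f [^]\<^bsub>G\<^esub> k) x0) x0" by (rule dist_triangle)
    moreover have "dist (act (f [^]\<^bsub>G\<^esub> k) (act f x0)) (act (f [^]\<^bsub>G\<^esub> k) x0) = dist (act f x0) x0"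
      by (rule act_iso[OF A pc])
    ultimately show ?thesis unfolding \<rho>_def e1 fx1 by linarith
  qed
  define \<kappa> where "\<kappa> = \<tau> - 2*cc - 2*\<delta>"
  have kpos: "\<kappa> > 0" unfolding \<kappa>_def using tau d0 by linarith
  have rholow: "\<rho> k \<ge> real k * \<kappa> - 80*\<delta>" for k
  proof -
    have pc: "f [^]\<^bsub>G\<^esub> k \<in> carrier G" by (rule pow_closed[OF A fc])
    have "dist (act (f [^]\<^bsub>G\<^esub> k) ?q) ?q \<le> dist (act (f [^]\<^bsub>G\<^esub> k) ?q) (act (f [^]\<^bsub>G\<^esub> k) x0)
        + dist (act (f [^]\<^bsub>G\<^esub> k) x0) x0 + dist x0 ?q"
      using dist_triangle[of "act (f [^]\<^bsub>G\<^esub> k) ?q" ?q "act (f [^]\<^bsub>G\<^esub> k) x0"]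
        dist_triangle[of "act (f [^]\<^bsub>G\<^esub> k) x0" ?q x0] by linarith
    moreover have "dist (act (f [^]\<^bsub>G\<^esub> k) ?q) (act (f [^]\<^bsub>G\<^esub> k) x0) = dist ?q x0" by (rule act_iso[OF A pc])
    moreover have "dist (act (f [^]\<^bsub>G\<^esub> k) ?q) ?q \<ge> real k * \<kappa>" using O(1)[of k] unfolding \<kappa>_def \<tau>_def .
    ultimately show ?thesis unfolding \<rho>_def using x0s qx by linarith
  qed
  have ex: "\<exists>k. 1 \<le> k \<and> \<rho> k > 2*B"
  proof -
    obtain n :: nat where n: "(2*B + 80*\<delta>) / \<kappa> < real n" using reals_Archimedean2 by blast
    have "2*B + 80*\<delta> < real n * \<kappa>" using n kpos by (simp add: pos_divide_less_eq)
    moreover have "real n * \<kappa> \<le> real (Suc n) * \<kappa>" using kpos by simp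
    ultimately have "\<rho> (Suc n) > 2*B" using rholow[of "Suc n"] by linarith
    then show ?thesis by (intro exI[of _ "Suc n"]) simp
  qed
  define km where "km = (LEAST k. 1 \<le> k \<and> \<rho> k > 2*B)"
  have km: "1 \<le> km" "\<rho> km > 2*B" using LeastI_ex[OF ex] unfolding km_def by auto
  have kmb: "\<rho> km \<le> 2*B + \<rho> 1"
  proof (cases "km = 1")
    case True then show ?thesis using B0 by simp
  next
    case False
    define j where "j = km - 1"
    have j: "km = Suc j" "1 \<le> j" unfolding j_def using km(1) False by auto
    have "j < km" using j by simp
    then have "\<not> (1 \<le> j \<and> \<rho> j > 2*B)" unfolding km_def by (rule not_less_Least)
    then have "\<rho> j \<le> 2*B" using j by simp
    moreover have "\<rho> km \<le> \<rho> j + \<rho> 1" unfolding j(1) by (rule rhoS)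
    ultimately show ?thesis by linarith
  qed
  have st: "2 * (min (\<rho> km) D - B) \<le> \<rho> km" using step[OF km(1)] .
  have O3': "\<tau> \<le> translation_length act e + 2*cc + 2*\<delta>" using O3 tlf by simp
  show False
  proof (cases "\<rho> km \<le> D")
    case True
    then have "2 * (\<rho> km - B) \<le> \<rho> km" using st by (simp add: min_def)
    then have "2 * \<rho> km - 2 * B \<le> \<rho> km" by (simp add: algebra_simps)
    then show False using km(2) by linarith
  next
    case False
    then have "2 * (D - B) \<le> \<rho> km" using st by (simp add: min_def)
    then have "2 * D - 2 * B \<le> \<rho> km" by (simp add: algebra_simps)
    then have "2*D - 2*B \<le> 2*B + \<tau> + 80*\<delta>" using kmb rho1 by linarith
    then have "2*D \<le> 4*B + TE + \<epsilon> + 2*cc + 82*\<delta>" using O3' te2 by linarith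
    moreover have "2*D = TE + 3000*\<delta> + 2*\<epsilon>" unfolding \<epsilon>_def by (simp add: algebra_simps)
    ultimately show False using eps B_def ccv Kb d0 by linarith
  qed
qed

lemma red_from_E_reduced:
  fixes act :: "'g \<Rightarrow> 'x::metric_space \<Rightarrow> 'x"
  assumes A: "isometric_action G act" and sg: "subgroup E G" and tc: "t \<in> carrier G"
    and R: "E_reduced G act \<delta> E t x0"
  shows "\<forall>e\<in>E. dist (act t x0) x0 \<le> dist (act e (act t x0)) x0"
    and "\<forall>e\<in>E. dist (act (inv\<^bsub>G\<^esub> t) x0) x0 \<le> dist (act e (act (inv\<^bsub>G\<^esub> t) x0)) x0"
proof -
  have gr: "group G" using act_group[OF A] .
  have eq: "dist (act t x0) x0 = (INF ef \<in> E \<times> E. dist (act (fst ef \<otimes>\<^bsub>G\<^esub> t \<otimes>\<^bsub>G\<^esub> snd ef) x0) x0)"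
    using R unfolding E_reduced_def by blast
  have low: "dist (act t x0) x0 \<le> dist (act (e1 \<otimes>\<^bsub>G\<^esub> t \<otimes>\<^bsub>G\<^esub> e2) x0) x0" if "e1 \<in> E" "e2 \<in> E" for e1 e2
  proof -
    have "(INF ef \<in> E \<times> E. dist (act (fst ef \<otimes>\<^bsub>G\<^esub> t \<otimes>\<^bsub>G\<^esub> snd ef) x0) x0)
        \<le> dist (act (fst (e1, e2) \<otimes>\<^bsub>G\<^esub> t \<otimes>\<^bsub>G\<^esub> snd (e1, e2)) x0) x0"
      by (rule cINF_lower) (use that in \<open>auto intro: bdd_belowI[of _ 0]\<close>)
    then show ?thesis using eq by simp
  qed
  have one: "\<one>\<^bsub>G\<^esub> \<in> E" using subgroup.one_closed[OF sg] .
  show "\<forall>e\<in>E. dist (act t x0) x0 \<le> dist (act e (act t x0)) x0"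
  proof
    fix e assume e: "e \<in> E"
    have ec: "e \<in> carrier G" using subgroup_carrier[OF sg e] .
    have etc: "e \<otimes>\<^bsub>G\<^esub> t \<in> carrier G" using group.subgroupE(4)[OF gr] monoid.m_closed[OF group.is_monoid[OF gr] ec tc] by blast
    have "e \<otimes>\<^bsub>G\<^esub> t \<otimes>\<^bsub>G\<^esub> \<one>\<^bsub>G\<^esub> = e \<otimes>\<^bsub>G\<^esub> t" using monoid.r_one[OF group.is_monoid[OF gr] etc] .
    then have "act (e \<otimes>\<^bsub>G\<^esub> t \<otimes>\<^bsub>G\<^esub> \<one>\<^bsub>G\<^esub>) x0 = act e (act t x0)" using act_mult[OF A ec tc] by simp
    then show "dist (act t x0) x0 \<le> dist (act e (act t x0)) x0" using low[OF e one] by simp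
  qed
  show "\<forall>e\<in>E. dist (act (inv\<^bsub>G\<^esub> t) x0) x0 \<le> dist (act e (act (inv\<^bsub>G\<^esub> t) x0)) x0"
  proof
    fix e assume e: "e \<in> E"
    have ec: "e \<in> carrier G" using subgroup_carrier[OF sg e] .
    have ie: "inv\<^bsub>G\<^esub> e \<in> E" using subgroup_inv[OF sg e] .
    have iec: "inv\<^bsub>G\<^esub> e \<in> carrier G" using subgroup_carrier[OF sg ie] .
    have itc: "inv\<^bsub>G\<^esub> t \<in> carrier G" using group.inv_closed[OF gr tc] .
    have "\<one>\<^bsub>G\<^esub> \<otimes>\<^bsub>G\<^esub> t = t" using monoid.l_one[OF group.is_monoid[OF gr] tc] .
    then have "act (\<one>\<^bsub>G\<^esub> \<otimes>\<^bsub>G\<^esub> t \<otimes>\<^bsub>G\<^esub> inv\<^bsub>G\<^esub> e) x0 = act t (act (inv\<^bsub>G\<^esub> e) x0)"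
      using act_mult[OF A tc iec] by simp
    then have l1: "dist (act t x0) x0 \<le> dist (act t (act (inv\<^bsub>G\<^esub> e) x0)) x0" using low[OF one ie] by simp
    have "dist (act e (act (inv\<^bsub>G\<^esub> t) x0)) x0
        = dist (act (inv\<^bsub>G\<^esub> e) (act e (act (inv\<^bsub>G\<^esub> t) x0))) (act (inv\<^bsub>G\<^esub> e) x0)"
      by (rule act_iso[OF A iec, symmetric])
    also have "\<dots> = dist (act (inv\<^bsub>G\<^esub> t) x0) (act (inv\<^bsub>G\<^esub> e) x0)" by (simp only: act_inv_left[OF A ec])
    also have "\<dots> = dist (act t (act (inv\<^bsub>G\<^esub> t) x0)) (act t (act (inv\<^bsub>G\<^esub> e) x0))"
      by (rule act_iso[OF A tc, symmetric])
    also have "\<dots> = dist x0 (act t (act (inv\<^bsub>G\<^esub> e) x0))" by (simp only: act_inv_right[OF A tc])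
    finally have l2: "dist (act e (act (inv\<^bsub>G\<^esub> t) x0)) x0 = dist (act t (act (inv\<^bsub>G\<^esub> e) x0)) x0"
      by (simp add: dist_commute)
    have "dist (act (inv\<^bsub>G\<^esub> t) x0) x0 = dist (act t x0) x0" by (rule disp_inv[OF A tc])
    then show "dist (act (inv\<^bsub>G\<^esub> t) x0) x0 \<le> dist (act e (act (inv\<^bsub>G\<^esub> t) x0)) x0" using l1 l2 by simp
  qed
qed

theorem lemma3p5:
  fixes G :: "('g, 'b) monoid_scheme" and act :: "'g \<Rightarrow> 'x::metric_space \<Rightarrow> 'x"
    and \<delta> \<kappa>\<^sub>0 \<rho>\<^sub>0 :: real and N\<^sub>0 :: nat
    and E :: "'g set" and x\<^sub>0 :: 'x and t v :: 'g
  assumes "standing_assumptions G act \<delta> \<kappa>\<^sub>0 \<rho>\<^sub>0 N\<^sub>0"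
    and "max_loxodromic G act E"
    and "x\<^sub>0 \<in> C_set act \<delta> E"
    and "t \<in> carrier G"
    and "E_reduced G act \<delta> E t x\<^sub>0"
    and "v \<in> E"
  shows "gromov x\<^sub>0 (act t x\<^sub>0) (act v x\<^sub>0) \<le> subgroup_trlen act \<delta> E / 2 + 1500 * \<delta> \<and>
         gromov x\<^sub>0 (act (inv\<^bsub>G\<^esub> t) x\<^sub>0) (act v x\<^sub>0) \<le> subgroup_trlen act \<delta> E / 2 + 1500 * \<delta>"
proof -
  have Geo: "geodesic_space TYPE('x)" and H: "hyperbolic_space TYPE('x) \<delta>" and A: "isometric_action G act"
    using assms(1) unfolding standing_assumptions_def by blast+
  have lox: "loxodromic G act E" using assms(2) unfolding max_loxodromic_def by blast
  have sg: "subgroup E G" using lox unfolding loxodromic_def elementary_def by blast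
  have d0: "\<delta> \<ge> 0" using hyp_delta[OF H] .
  have gr: "group G" using act_group[OF A] .
  have itc: "inv\<^bsub>G\<^esub> t \<in> carrier G" using group.inv_closed[OF gr assms(4)] .
  note R = red_from_E_reduced[OF A sg assms(4) assms(5)]
  obtain \<gamma> K s where al: "aligned \<gamma> K" and K0: "K \<ge> 0" and Kb: "K \<le> 5/2 * \<delta>"
    and he: "has_endpoints act E \<gamma>" and xs: "dist x\<^sub>0 (\<gamma> s) \<le> 40 * \<delta>"
  proof (cases "\<delta> = 0")
    case True
    then obtain \<gamma> s where g: "geodesic_line \<gamma>" "has_endpoints act E \<gamma>" "x\<^sub>0 = \<gamma> s"
      using assms(3) unfolding C_set_def by auto
    show ?thesis by (rule that[of \<gamma> 0 s]) (use g geodesic_aligned True in auto)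
  next
    case False
    then have dpos: "\<delta> > 0" using d0 by simp
    obtain \<gamma> s where g: "local_quasi_geodesic (200 * \<delta>) \<delta> \<gamma>" "has_endpoints act E \<gamma>" "dist x\<^sub>0 (\<gamma> s) \<le> 40 * \<delta>"
      using assms(3) False unfolding C_set_def by auto
    have "aligned \<gamma> (5/2 * \<delta>)" by (rule locgood_aligned[OF H dpos lqg_locgood[OF g(1)]])
    then show ?thesis by (rule that[of \<gamma> "5/2 * \<delta>" s]) (use g dpos in auto)
  qed
  show ?thesis
  proof
    show "gromov x\<^sub>0 (act t x\<^sub>0) (act v x\<^sub>0) \<le> subgroup_trlen act \<delta> E / 2 + 1500 * \<delta>"
      by (rule main_bound[OF Geo H A sg lox al K0 Kb he xs assms(4) R(1) assms(6)])
    show "gromov x\<^sub>0 (act (inv\<^bsub>G\<^esub> t) x\<^sub>0) (act v x\<^sub>0) \<le> subgroup_trlen act \<delta> E / 2 + 1500 * \<delta>"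
      by (rule main_bound[OF Geo H A sg lox al K0 Kb he xs itc R(2) assms(6)])
  qed
qed

end
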